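(* The functor $\pi\colon\mathrm{EEED}\to\mathrm{ED}$ is essentially surjective and reflects isomorphisms. Moreover, for any $N,N'\in\mathrm{EEED}$ there is a natural short exact sequence \[ 0\to\mathrm{Hom}(\alpha(N)[2],\gamma(N')/2)\xrightarrow{\xi}\mathrm{EEED}(N,N')\xrightarrow{\pi}\mathrm{ED}(\pi(N),\pi(N'))\to 0. \] (In particular, $\pi$ is full.)
   Context: For an abelian group $U$, $U[2]=\{u:2u=0\}$ and $U/2=U/2U$. An extended $\eta$-diagram is a diagram of abelian groups $B\xrightarrow{\psi}A\xrightarrow{\eta}C\xrightarrow{\chi}B$ with $2\eta=0$, $\psi\chi=0$ and $\chi\eta\psi=2\cdot1_B$; write it $N=(A,B,C,\eta,\chi,\psi)$. A morphism $N\to N'$ is a triple $(f,g,h)$ with $f\colon A\to A'$, $g\colon B\to B'$, $h\colon C\to C'$, $f\psi=\psi'g$, $h\eta=\eta'f$, $g\chi=\chi'h$. One has $2\psi=0=2\chi$, so there are induced maps $C/2\xrightarrow{\chi}B\xrightarrow{\psi}A[2]$; $N$ is exact if this sequence is short exact. $\mathrm{EEED}$ is the category of exact extended $\eta$-diagrams. An $\eta$-diagram is a homomorphism $\eta\colon A\to C$ with $2\eta=0$; morphisms are pairs $(f,h)$ with $h\eta=\eta'f$; this category is $\mathrm{ED}$. The functor $\pi$ sends $N$ to $(A\xrightarrow{\eta}C)$ and $(f,g,h)$ to $(f,h)$; $\alpha(N)=A$, $\gamma(N)=C$. For $u\colon A[2]\to C'/2$, $\xi(u)$ is the morphism $(0,\bar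 u,0)\colon N\to N'$ where $\bar u$ is the composite $B\xrightarrow{\psi}A[2]\xrightarrow{u}C'/2\xrightarrow{\chi'}B'$. *)

theory Defs
  imports "HOL-Algebra.Coset"
begin

text \<open>Abelian groups are HOL-Algebra groups (written multiplicatively; "2u" is u \<otimes> u,
  "0" is the unit).  Homomorphisms between groups are extensional (undefined outside
  the carrier), so that equality of morphisms is HOL equality.\<close>

definition ghom :: "'a monoid \<Rightarrow> 'b monoid \<Rightarrow> ('a \<Rightarrow> 'b) set" where
  "ghom G H = hom G H \<inter> extensional (carrier G)"

definition two_torsion :: "'a monoid \<Rightarrow> 'a set" where
  "two_torsion G = {x \<in> carrier G. x \<otimes>\<^bsub>G\<^esub> x = \<one>\<^bsub>G\<^esub>}"

definition tors2 :: "'a monoid \<Rightarrow> 'a monoid" where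
  "tors2 G = G\<lparr>carrier := two_torsion G\<rparr>"

definition twice :: "'a monoid \<Rightarrow> 'a set" where
  "twice G = {x \<otimes>\<^bsub>G\<^esub> x | x. x \<in> carrier G}"

definition mod2 :: "'a monoid \<Rightarrow> 'a set monoid" where
  "mod2 G = G Mod (twice G)"

definition mod2_map :: "'a monoid \<Rightarrow> 'b monoid \<Rightarrow> ('a \<Rightarrow> 'b) \<Rightarrow> 'a set \<Rightarrow> 'b set" where
  "mod2_map G H h = (\<lambda>X\<in>carrier (mod2 G). twice H #>\<^bsub>H\<^esub> h (SOME x. x \<in> X))"

definition hom_add :: "'a monoid \<Rightarrow> 'b monoid \<Rightarrow> ('a \<Rightarrow> 'b) \<Rightarrow> ('a \<Rightarrow> 'b) \<Rightarrow> 'a \<Rightarrow> 'b" where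
  "hom_add G H u v = (\<lambda>x\<in>carrier G. u x \<otimes>\<^bsub>H\<^esub> v x)"

definition hom_zero :: "'a monoid \<Rightarrow> 'b monoid \<Rightarrow> 'a \<Rightarrow> 'b" where
  "hom_zero G H = (\<lambda>x\<in>carrier G. \<one>\<^bsub>H\<^esub>)"

record ('a, 'b, 'c) eeed =
  grpA :: "'a monoid"
  grpB :: "'b monoid"
  grpC :: "'c monoid"
  eta :: "'a \<Rightarrow> 'c"
  chi :: "'c \<Rightarrow> 'b"
  psi :: "'b \<Rightarrow> 'a"

definition is_eed :: "('a, 'b, 'c) eeed \<Rightarrow> bool" where
  "is_eed N \<longleftrightarrow>
     comm_group (grpA N) \<and> comm_group (grpB N) \<and> comm_group (grpC N) \<and>
     eta N \<in> hom (grpA N) (grpC N) \<and> chi N \<in> hom (grpC N) (grpB N) \<and>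
     psi N \<in> hom (grpB N) (grpA N) \<and>
     (\<forall>a\<in>carrier (grpA N). eta N (a \<otimes>\<^bsub>grpA N\<^esub> a) = \<one>\<^bsub>grpC N\<^esub>) \<and>
     (\<forall>c\<in>carrier (grpC N). psi N (chi N c) = \<one>\<^bsub>grpA N\<^esub>) \<and>
     (\<forall>b\<in>carrier (grpB N). chi N (eta N (psi N b)) = b \<otimes>\<^bsub>grpB N\<^esub> b)"

text \<open>Exactness of the induced sequence C/2 --chi--> B --psi--> A[2], written out:
  psi onto A[2], ker psi = im chi, and the induced map C/2 \<rightarrow> B is injective.\<close>
definition eed_exact :: "('a, 'b, 'c) eeed \<Rightarrow> bool" where
  "eed_exact N \<longleftrightarrow>
     (\<forall>a\<in>two_torsion (grpA N). \<exists>b\<in>carrier (grpB N). psi N b = a) \<and>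
     (\<forall>b\<in>carrier (grpB N). psi N b = \<one>\<^bsub>grpA N\<^esub> \<longrightarrow> (\<exists>c\<in>carrier (grpC N). chi N c = b)) \<and>
     (\<forall>c\<in>carrier (grpC N). chi N c = \<one>\<^bsub>grpB N\<^esub> \<longrightarrow> c \<in> twice (grpC N))"

definition is_eeed :: "('a, 'b, 'c) eeed \<Rightarrow> bool" where
  "is_eeed N \<longleftrightarrow> is_eed N \<and> eed_exact N"

type_synonym ('a, 'b, 'c, 'a2, 'b2, 'c2) eeed_mor =
  "('a \<Rightarrow> 'a2) \<times> ('b \<Rightarrow> 'b2) \<times> ('c \<Rightarrow> 'c2)"

definition eeed_hom :: "('a, 'b, 'c) eeed \<Rightarrow> ('a2, 'b2, 'c2) eeed
    \<Rightarrow> ('a, 'b, 'c, 'a2, 'b2, 'c2) eeed_mor set" where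
  "eeed_hom N N' = {(f, g, h).
     f \<in> ghom (grpA N) (grpA N') \<and> g \<in> ghom (grpB N) (grpB N') \<and> h \<in> ghom (grpC N) (grpC N') \<and>
     (\<forall>b\<in>carrier (grpB N). f (psi N b) = psi N' (g b)) \<and>
     (\<forall>a\<in>carrier (grpA N). h (eta N a) = eta N' (f a)) \<and>
     (\<forall>c\<in>carrier (grpC N). g (chi N c) = chi N' (h c))}"

definition eeed_id :: "('a, 'b, 'c) eeed \<Rightarrow> ('a, 'b, 'c, 'a, 'b, 'c) eeed_mor" where
  "eeed_id N = ((\<lambda>x\<in>carrier (grpA N). x), (\<lambda>x\<in>carrier (grpB N). x), (\<lambda>x\<in>carrier (grpC N). x))"

text \<open>Composition m' \<circ> m, where m has source N.\<close>
definition eeed_comp :: "('a, 'b, 'c) eeed \<Rightarrow> ('a2, 'b2, 'c2, 'a3, 'b3, 'c3) eeed_mor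
    \<Rightarrow> ('a, 'b, 'c, 'a2, 'b2, 'c2) eeed_mor \<Rightarrow> ('a, 'b, 'c, 'a3, 'b3, 'c3) eeed_mor" where
  "eeed_comp N m' m = (case m' of (f', g', h') \<Rightarrow> case m of (f, g, h) \<Rightarrow>
     (compose (carrier (grpA N)) f' f, compose (carrier (grpB N)) g' g, compose (carrier (grpC N)) h' h))"

definition eeed_iso :: "('a, 'b, 'c) eeed \<Rightarrow> ('a2, 'b2, 'c2) eeed
    \<Rightarrow> ('a, 'b, 'c, 'a2, 'b2, 'c2) eeed_mor \<Rightarrow> bool" where
  "eeed_iso N N' m \<longleftrightarrow> m \<in> eeed_hom N N' \<and>
     (\<exists>m'\<in>eeed_hom N' N. eeed_comp N m' m = eeed_id N \<and> eeed_comp N' m m' = eeed_id N')"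

definition eeed_add :: "('a, 'b, 'c) eeed \<Rightarrow> ('a2, 'b2, 'c2) eeed
    \<Rightarrow> ('a, 'b, 'c, 'a2, 'b2, 'c2) eeed_mor \<Rightarrow> ('a, 'b, 'c, 'a2, 'b2, 'c2) eeed_mor
    \<Rightarrow> ('a, 'b, 'c, 'a2, 'b2, 'c2) eeed_mor" where
  "eeed_add N N' m m' = (case m of (f, g, h) \<Rightarrow> case m' of (f', g', h') \<Rightarrow>
     (hom_add (grpA N) (grpA N') f f', hom_add (grpB N) (grpB N') g g', hom_add (grpC N) (grpC N') h h'))"

record ('a, 'c) ed =
  edA :: "'a monoid"
  edC :: "'c monoid"
  edEta :: "'a \<Rightarrow> 'c"

definition is_ed :: "('a, 'c) ed \<Rightarrow> bool" where
  "is_ed E \<longleftrightarrow> comm_group (edA E) \<and> comm_group (edC E) \<and> edEta E \<in> hom (edA E) (edC E) \<and>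
     (\<forall>a\<in>carrier (edA E). edEta E (a \<otimes>\<^bsub>edA E\<^esub> a) = \<one>\<^bsub>edC E\<^esub>)"

type_synonym ('a, 'c, 'a2, 'c2) ed_mor = "('a \<Rightarrow> 'a2) \<times> ('c \<Rightarrow> 'c2)"

definition ed_hom :: "('a, 'c) ed \<Rightarrow> ('a2, 'c2) ed \<Rightarrow> ('a, 'c, 'a2, 'c2) ed_mor set" where
  "ed_hom E E' = {(f, h). f \<in> ghom (edA E) (edA E') \<and> h \<in> ghom (edC E) (edC E') \<and>
     (\<forall>a\<in>carrier (edA E). h (edEta E a) = edEta E' (f a))}"

definition ed_id :: "('a, 'c) ed \<Rightarrow> ('a, 'c, 'a, 'c) ed_mor" where
  "ed_id E = ((\<lambda>x\<in>carrier (edA E). x), (\<lambda>x\<in>carrier (edC E). x))"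

definition ed_comp :: "('a, 'c) ed \<Rightarrow> ('a2, 'c2, 'a3, 'c3) ed_mor
    \<Rightarrow> ('a, 'c, 'a2, 'c2) ed_mor \<Rightarrow> ('a, 'c, 'a3, 'c3) ed_mor" where
  "ed_comp E m' m = (case m' of (f', h') \<Rightarrow> case m of (f, h) \<Rightarrow>
     (compose (carrier (edA E)) f' f, compose (carrier (edC E)) h' h))"

definition ed_iso :: "('a, 'c) ed \<Rightarrow> ('a2, 'c2) ed \<Rightarrow> ('a, 'c, 'a2, 'c2) ed_mor \<Rightarrow> bool" where
  "ed_iso E E' m \<longleftrightarrow> m \<in> ed_hom E E' \<and>
     (\<exists>m'\<in>ed_hom E' E. ed_comp E m' m = ed_id E \<and> ed_comp E' m m' = ed_id E')"

definition ed_isomorphic :: "('a, 'c) ed \<Rightarrow> ('a2, 'c2) ed \<Rightarrow> bool" where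
  "ed_isomorphic E E' \<longleftrightarrow> (\<exists>m. ed_iso E E' m)"

definition ed_add :: "('a, 'c) ed \<Rightarrow> ('a2, 'c2) ed
    \<Rightarrow> ('a, 'c, 'a2, 'c2) ed_mor \<Rightarrow> ('a, 'c, 'a2, 'c2) ed_mor \<Rightarrow> ('a, 'c, 'a2, 'c2) ed_mor" where
  "ed_add E E' m m' = (case m of (f, h) \<Rightarrow> case m' of (f', h') \<Rightarrow>
     (hom_add (edA E) (edA E') f f', hom_add (edC E) (edC E') h h'))"

definition ed_zero :: "('a, 'c) ed \<Rightarrow> ('a2, 'c2) ed \<Rightarrow> ('a, 'c, 'a2, 'c2) ed_mor" where
  "ed_zero E E' = (hom_zero (edA E) (edA E'), hom_zero (edC E) (edC E'))"

definition pi_obj :: "('a, 'b, 'c) eeed \<Rightarrow> ('a, 'c) ed" where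
  "pi_obj N = \<lparr>edA = grpA N, edC = grpC N, edEta = eta N\<rparr>"

definition pi_mor :: "('a, 'b, 'c, 'a2, 'b2, 'c2) eeed_mor \<Rightarrow> ('a, 'c, 'a2, 'c2) ed_mor" where
  "pi_mor m = (case m of (f, g, h) \<Rightarrow> (f, h))"

text \<open>xi(u) = (0, chi' o u o psi, 0) for u : A[2] \<rightarrow> C'/2; the induced map
  chi' : C'/2 \<rightarrow> B' is evaluated on a representative of the coset.\<close>
definition xi :: "('a, 'b, 'c) eeed \<Rightarrow> ('a2, 'b2, 'c2) eeed
    \<Rightarrow> ('a \<Rightarrow> 'c2 set) \<Rightarrow> ('a, 'b, 'c, 'a2, 'b2, 'c2) eeed_mor" where
  "xi N N' u = (hom_zero (grpA N) (grpA N'),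
                (\<lambda>b\<in>carrier (grpB N). chi N' (SOME c. c \<in> u (psi N b))),
                hom_zero (grpC N) (grpC N'))"

end

theory Submission
  imports Defs
begin

locale cg = comm_group G for G :: "'a monoid" (structure)

lemma (in cg) sq_mult: "x \<in> carrier G \<Longrightarrow> y \<in> carrier G \<Longrightarrow> (x \<otimes> y) \<otimes> (x \<otimes> y) = (x \<otimes> x) \<otimes> (y \<otimes> y)"
  by (metis m_assoc m_closed m_lcomm)

lemma (in cg) twice_subgroup: "subgroup (twice G) G"
proof (rule subgroupI)
  show "twice G \<subseteq> carrier G" by (auto simp: twice_def)
  show "twice G \<noteq> {}" by (auto simp: twice_def)
  fix a b assume "a \<in> twice G" "b \<in> twice G"
  then obtain x y where xy: "x \<in> carrier G" "y \<in> carrier G" "a = x \<otimes> x" "b = y \<otimes> y"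
    by (auto simp: twice_def)
  show "inv a \<in> twice G" unfolding twice_def using xy
    by (auto intro!: exI[of _ "inv x"] simp: inv_mult)
  show "a \<otimes> b \<in> twice G" unfolding twice_def using xy
    by (auto intro!: exI[of _ "x \<otimes> y"] simp: sq_mult)
qed

lemma (in cg) twice_normal: "twice G \<lhd> G"
  by (simp add: subgroup_imp_normal twice_subgroup)

lemma (in cg) mod2_comm_group: "comm_group (mod2 G)"
  unfolding mod2_def by (rule abelian_FactGroup[OF twice_subgroup])

lemma (in cg) mod2_group: "group (mod2 G)"
  using mod2_comm_group comm_group.axioms(2) by blast

lemma carrier_mod2: "carrier (mod2 G) = rcosets\<^bsub>G\<^esub> (twice G)"
  by (simp add: mod2_def FactGroup_def)

lemma mult_mod2: "mult (mod2 G) = set_mult G"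
  by (simp add: mod2_def)

lemma one_mod2: "one (mod2 G) = twice G"
  by (simp add: mod2_def)

lemma (in cg) cls_closed: "c \<in> carrier G \<Longrightarrow> twice G #> c \<in> carrier (mod2 G)"
  by (simp add: carrier_mod2 rcosetsI twice_subgroup subgroup.subset)

lemma (in cg) cls_hom: "(\<lambda>c. twice G #> c) \<in> hom G (mod2 G)"
  unfolding mod2_def by (rule normal.r_coset_hom_Mod[OF twice_normal])

lemma (in cg) cls_mult: "c \<in> carrier G \<Longrightarrow> d \<in> carrier G \<Longrightarrow>
   (twice G #> c) \<otimes>\<^bsub>mod2 G\<^esub> (twice G #> d) = twice G #> (c \<otimes> d)"
  using cls_hom by (simp add: hom_mult)

lemma (in cg) cls_mult': "c \<in> carrier G \<Longrightarrow> d \<in> carrier G \<Longrightarrow>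
   (twice G #> c) <#> (twice G #> d) = twice G #> (c \<otimes> d)"
  using cls_mult by (simp add: mult_mod2)

lemma (in cg) mod2_elem: "X \<in> carrier (mod2 G) \<Longrightarrow> \<exists>c\<in>carrier G. X = twice G #> c"
  by (auto simp: carrier_mod2 RCOSETS_def)

lemma (in cg) rep_mem: "X \<in> carrier (mod2 G) \<Longrightarrow> (SOME x. x \<in> X) \<in> X"
  by (metis mod2_elem rcos_self twice_subgroup someI)

lemma (in cg) mod2_sub: "X \<in> carrier (mod2 G) \<Longrightarrow> X \<subseteq> carrier G"
  by (metis mod2_elem r_coset_subset_G twice_subgroup subgroup.subset)

lemma (in cg) rep_carrier: "X \<in> carrier (mod2 G) \<Longrightarrow> (SOME x. x \<in> X) \<in> carrier G"
  using rep_mem mod2_sub by blast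

lemma (in cg) cls_of_mem: "X \<in> carrier (mod2 G) \<Longrightarrow> x \<in> X \<Longrightarrow> twice G #> x = X"
  by (metis mod2_elem repr_independence twice_subgroup)

lemma (in cg) cls_rep: "X \<in> carrier (mod2 G) \<Longrightarrow> twice G #> (SOME x. x \<in> X) = X"
  using cls_of_mem rep_mem by blast

lemma (in cg) cls_eq_iff: "c \<in> carrier G \<Longrightarrow> d \<in> carrier G \<Longrightarrow>
   (twice G #> c = twice G #> d) \<longleftrightarrow> c \<otimes> inv d \<in> twice G"
  by (metis repr_independence rcos_self subgroup.rcos_module_imp subgroup.rcos_module_rev
        twice_subgroup is_group)

lemma (in cg) cls_one_iff: "c \<in> carrier G \<Longrightarrow> (twice G #> c = twice G) \<longleftrightarrow> c \<in> twice G"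
  using cls_eq_iff[of c \<one>] by (simp add: coset_mult_one twice_subgroup subgroup.subset)

lemma (in cg) sq_twice: "c \<in> carrier G \<Longrightarrow> c \<otimes> c \<in> twice G"
  by (auto simp: twice_def)

lemma (in cg) mod2_sq: "X \<in> carrier (mod2 G) \<Longrightarrow> X \<otimes>\<^bsub>mod2 G\<^esub> X = \<one>\<^bsub>mod2 G\<^esub>"
  by (metis cls_mult cls_one_iff m_closed mod2_elem one_mod2 sq_twice)

lemma (in cg) two_torsion_subgroup: "subgroup (two_torsion G) G"
proof (rule subgroupI)
  show "two_torsion G \<subseteq> carrier G" by (auto simp: two_torsion_def)
  show "two_torsion G \<noteq> {}" by (auto simp: two_torsion_def)
  fix a b assume "a \<in> two_torsion G" "b \<in> two_torsion G"
  then show "inv a \<in> two_torsion G" "a \<otimes> b \<in> two_torsion G"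
    by (auto simp: two_torsion_def sq_mult inv_mult simp flip: inv_mult_group)
qed

lemma carrier_tors2[simp]: "carrier (tors2 G) = two_torsion G" by (simp add: tors2_def)
lemma mult_tors2[simp]: "mult (tors2 G) = mult G" by (simp add: tors2_def)
lemma one_tors2[simp]: "one (tors2 G) = one G" by (simp add: tors2_def)

lemma (in cg) tors2_comm_group: "comm_group (tors2 G)"
proof -
  have g: "group (tors2 G)" unfolding tors2_def
    using subgroup.subgroup_is_group[OF two_torsion_subgroup is_group] .
  show ?thesis
    by (rule group.group_comm_groupI[OF g]) (auto simp: two_torsion_def m_comm)
qed

lemma hom_one': "h \<in> hom G H \<Longrightarrow> group G \<Longrightarrow> group H \<Longrightarrow> h \<one>\<^bsub>G\<^esub> = \<one>\<^bsub>H\<^esub>"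
  by (simp add: group_hom.hom_one group_hom.intro group_hom_axioms.intro)

lemma hom_inv': "h \<in> hom G H \<Longrightarrow> group G \<Longrightarrow> group H \<Longrightarrow> x \<in> carrier G \<Longrightarrow> h (inv\<^bsub>G\<^esub> x) = inv\<^bsub>H\<^esub> (h x)"
  by (simp add: group_hom.hom_inv group_hom.intro group_hom_axioms.intro)

lemma (in group) eq_iff_inv: "x \<in> carrier G \<Longrightarrow> y \<in> carrier G \<Longrightarrow> (x \<otimes> inv y = \<one>) \<longleftrightarrow> x = y"
  by (metis inv_solve_right one_closed l_one)

locale eL =
  fixes N :: "('a, 'b, 'c) eeed"
  assumes eeed: "is_eeed N"
begin

lemma cgA: "cg (grpA N)" and cgB: "cg (grpB N)" and cgC: "cg (grpC N)"
  using eeed by (auto simp: is_eeed_def is_eed_def cg_def)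

sublocale A: cg "grpA N" by (rule cgA)
sublocale B: cg "grpB N" by (rule cgB)
sublocale C: cg "grpC N" by (rule cgC)

lemma eta_hom: "eta N \<in> hom (grpA N) (grpC N)"
  and chi_hom: "chi N \<in> hom (grpC N) (grpB N)"
  and psi_hom: "psi N \<in> hom (grpB N) (grpA N)"
  and eta_sq: "\<And>a. a \<in> carrier (grpA N) \<Longrightarrow> eta N (a \<otimes>\<^bsub>grpA N\<^esub> a) = \<one>\<^bsub>grpC N\<^esub>"
  and psi_chi: "\<And>c. c \<in> carrier (grpC N) \<Longrightarrow> psi N (chi N c) = \<one>\<^bsub>grpA N\<^esub>"
  and chi_eta_psi: "\<And>b. b \<in> carrier (grpB N) \<Longrightarrow> chi N (eta N (psi N b)) = b \<otimes>\<^bsub>grpB N\<^esub> b"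
  and psi_onto: "\<And>a. a \<in> two_torsion (grpA N) \<Longrightarrow> \<exists>b\<in>carrier (grpB N). psi N b = a"
  and ker_psi: "\<And>b. b \<in> carrier (grpB N) \<Longrightarrow> psi N b = \<one>\<^bsub>grpA N\<^esub> \<Longrightarrow> \<exists>c\<in>carrier (grpC N). chi N c = b"
  and ker_chi: "\<And>c. c \<in> carrier (grpC N) \<Longrightarrow> chi N c = \<one>\<^bsub>grpB N\<^esub> \<Longrightarrow> c \<in> twice (grpC N)"
  using eeed by (auto simp: is_eeed_def is_eed_def eed_exact_def)

lemma eta_c[simp]: "a \<in> carrier (grpA N) \<Longrightarrow> eta N a \<in> carrier (grpC N)"
  using eta_hom by (simp add: hom_in_carrier)
lemma chi_c[simp]: "c \<in> carrier (grpC N) \<Longrightarrow> chi N c \<in> carrier (grpB N)"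
  using chi_hom by (simp add: hom_in_carrier)
lemma psi_c[simp]: "b \<in> carrier (grpB N) \<Longrightarrow> psi N b \<in> carrier (grpA N)"
  using psi_hom by (simp add: hom_in_carrier)
lemma eta_mult: "a \<in> carrier (grpA N) \<Longrightarrow> a' \<in> carrier (grpA N) \<Longrightarrow> eta N (a \<otimes>\<^bsub>grpA N\<^esub> a') = eta N a \<otimes>\<^bsub>grpC N\<^esub> eta N a'"
  using eta_hom by (simp add: hom_mult)
lemma chi_mult: "c \<in> carrier (grpC N) \<Longrightarrow> c' \<in> carrier (grpC N) \<Longrightarrow> chi N (c \<otimes>\<^bsub>grpC N\<^esub> c') = chi N c \<otimes>\<^bsub>grpB N\<^esub> chi N c'"
  using chi_hom by (simp add: hom_mult)
lemma psi_mult: "b \<in> carrier (grpB N) \<Longrightarrow> b' \<in> carrier (grpB N) \<Longrightarrow> psi N (b \<otimes>\<^bsub>grpB N\<^esub> b') = psi N b \<otimes>\<^bsub>grpA N\<^esub> psi N b'"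
  using psi_hom by (simp add: hom_mult)
lemma eta_one[simp]: "eta N \<one>\<^bsub>grpA N\<^esub> = \<one>\<^bsub>grpC N\<^esub>"
  by (rule hom_one'[OF eta_hom A.is_group C.is_group])
lemma chi_one[simp]: "chi N \<one>\<^bsub>grpC N\<^esub> = \<one>\<^bsub>grpB N\<^esub>"
  by (rule hom_one'[OF chi_hom C.is_group B.is_group])
lemma psi_one[simp]: "psi N \<one>\<^bsub>grpB N\<^esub> = \<one>\<^bsub>grpA N\<^esub>"
  by (rule hom_one'[OF psi_hom B.is_group A.is_group])
lemma chi_inv: "c \<in> carrier (grpC N) \<Longrightarrow> chi N (inv\<^bsub>grpC N\<^esub> c) = inv\<^bsub>grpB N\<^esub> (chi N c)"
  by (rule hom_inv'[OF chi_hom C.is_group B.is_group])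
lemma psi_inv: "b \<in> carrier (grpB N) \<Longrightarrow> psi N (inv\<^bsub>grpB N\<^esub> b) = inv\<^bsub>grpA N\<^esub> (psi N b)"
  by (rule hom_inv'[OF psi_hom B.is_group A.is_group])

lemma psi_tors: "b \<in> carrier (grpB N) \<Longrightarrow> psi N b \<in> two_torsion (grpA N)"
proof -
  assume b: "b \<in> carrier (grpB N)"
  have "psi N b \<otimes>\<^bsub>grpA N\<^esub> psi N b = psi N (chi N (eta N (psi N b)))"
    using b by (simp add: chi_eta_psi psi_mult)
  also have "\<dots> = \<one>\<^bsub>grpA N\<^esub>" using b by (simp add: psi_chi)
  finally show ?thesis using b by (simp add: two_torsion_def)
qed

lemma chi_sq: "c \<in> carrier (grpC N) \<Longrightarrow> chi N c \<otimes>\<^bsub>grpB N\<^esub> chi N c = \<one>\<^bsub>grpB N\<^esub>"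
proof -
  assume c: "c \<in> carrier (grpC N)"
  have "chi N c \<otimes>\<^bsub>grpB N\<^esub> chi N c = chi N (eta N (psi N (chi N c)))"
    using c by (simp add: chi_eta_psi)
  also have "\<dots> = \<one>\<^bsub>grpB N\<^esub>" using c by (simp add: psi_chi)
  finally show ?thesis .
qed

lemma chi_twice: "c \<in> twice (grpC N) \<Longrightarrow> chi N c = \<one>\<^bsub>grpB N\<^esub>"
  by (auto simp: twice_def chi_mult chi_sq)

lemma chi_cls_eq: "c \<in> carrier (grpC N) \<Longrightarrow> d \<in> carrier (grpC N) \<Longrightarrow>
   chi N c = chi N d \<longleftrightarrow> twice (grpC N) #>\<^bsub>grpC N\<^esub> c = twice (grpC N) #>\<^bsub>grpC N\<^esub> d"
proof -
  assume c: "c \<in> carrier (grpC N)" and d: "d \<in> carrier (grpC N)"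
  have "chi N c = chi N d \<longleftrightarrow> chi N (c \<otimes>\<^bsub>grpC N\<^esub> inv\<^bsub>grpC N\<^esub> d) = \<one>\<^bsub>grpB N\<^esub>"
    using c d by (simp add: chi_mult chi_inv B.eq_iff_inv)
  also have "\<dots> \<longleftrightarrow> c \<otimes>\<^bsub>grpC N\<^esub> inv\<^bsub>grpC N\<^esub> d \<in> twice (grpC N)"
    using c d chi_twice ker_chi by blast
  finally show ?thesis using c d C.cls_eq_iff by simp
qed

lemma chi_rep: "X \<in> carrier (mod2 (grpC N)) \<Longrightarrow> x \<in> X \<Longrightarrow> chi N (SOME x. x \<in> X) = chi N x"
  by (metis C.cls_of_mem C.mod2_sub C.rep_carrier C.rep_mem chi_cls_eq subsetD)

end

lemma pi_obj_simps[simp]: "edA (pi_obj N) = grpA N" "edC (pi_obj N) = grpC N" "edEta (pi_obj N) = eta N"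
  by (simp_all add: pi_obj_def)

context eL begin

definition rep :: "'c set \<Rightarrow> 'c" where "rep X = (SOME x. x \<in> X)"

lemma rep_mem': "X \<in> carrier (mod2 (grpC N)) \<Longrightarrow> rep X \<in> X"
  unfolding rep_def by (rule C.rep_mem)
lemma rep_c: "X \<in> carrier (mod2 (grpC N)) \<Longrightarrow> rep X \<in> carrier (grpC N)"
  unfolding rep_def by (rule C.rep_carrier)
lemma cls_rep': "X \<in> carrier (mod2 (grpC N)) \<Longrightarrow> twice (grpC N) #>\<^bsub>grpC N\<^esub> rep X = X"
  unfolding rep_def by (rule C.cls_rep)

lemma chibar_cls: "c \<in> carrier (grpC N) \<Longrightarrow> chi N (rep (twice (grpC N) #>\<^bsub>grpC N\<^esub> c)) = chi N c"
  unfolding rep_def by (rule chi_rep[OF C.cls_closed C.rcos_self[OF _ C.twice_subgroup]])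

lemma chibar_closed: "X \<in> carrier (mod2 (grpC N)) \<Longrightarrow> chi N (rep X) \<in> carrier (grpB N)"
  by (simp add: rep_c)

lemma chibar_mult: "X \<in> carrier (mod2 (grpC N)) \<Longrightarrow> Y \<in> carrier (mod2 (grpC N)) \<Longrightarrow>
    chi N (rep (X \<otimes>\<^bsub>mod2 (grpC N)\<^esub> Y)) = chi N (rep X) \<otimes>\<^bsub>grpB N\<^esub> chi N (rep Y)"
proof -
  assume X: "X \<in> carrier (mod2 (grpC N))" and Y: "Y \<in> carrier (mod2 (grpC N))"
  have "X \<otimes>\<^bsub>mod2 (grpC N)\<^esub> Y = twice (grpC N) #>\<^bsub>grpC N\<^esub> (rep X \<otimes>\<^bsub>grpC N\<^esub> rep Y)"
    using X Y by (metis C.cls_mult cls_rep' rep_c)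
  then show ?thesis using X Y by (simp add: chibar_cls rep_c chi_mult)
qed

lemma chibar_one: "chi N (rep (twice (grpC N))) = \<one>\<^bsub>grpB N\<^esub>"
  using chibar_cls[of "\<one>\<^bsub>grpC N\<^esub>"]
  by (simp add: C.coset_mult_one C.twice_subgroup subgroup.subset)

lemma chibar_inj: "X \<in> carrier (mod2 (grpC N)) \<Longrightarrow> Y \<in> carrier (mod2 (grpC N)) \<Longrightarrow>
    chi N (rep X) = chi N (rep Y) \<Longrightarrow> X = Y"
  by (metis chi_cls_eq cls_rep' rep_c)

lemma rep_psi_tors: "b \<in> carrier (grpB N) \<Longrightarrow> psi N b \<in> carrier (tors2 (grpA N))"
  by (simp add: psi_tors)

lemma tors_c: "a \<in> two_torsion (grpA N) \<Longrightarrow> a \<in> carrier (grpA N)"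
  by (simp add: two_torsion_def)

end

lemma hom_zero_ghom: "group G \<Longrightarrow> group H \<Longrightarrow> hom_zero G H \<in> ghom G H"
  by (auto simp: hom_zero_def ghom_def hom_def group.is_monoid monoid.m_closed)

lemma hom_zero_apply: "x \<in> carrier G \<Longrightarrow> hom_zero G H x = \<one>\<^bsub>H\<^esub>"
  by (simp add: hom_zero_def)

lemma ghomD: "u \<in> ghom G H \<Longrightarrow> u \<in> hom G H" "u \<in> ghom G H \<Longrightarrow> u \<in> extensional (carrier G)"
  by (auto simp: ghom_def)

lemma xi_hom:
  assumes "eL N" "eL N'" "u \<in> ghom (tors2 (grpA N)) (mod2 (grpC N'))"
  shows "xi N N' u \<in> eeed_hom N N'"
proof -
  interpret N: eL N by fact
  interpret N': eL N' by fact
  have uh: "u \<in> hom (tors2 (grpA N)) (mod2 (grpC N'))" using assms(3) ghomD by blast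
  have uc: "\<And>a. a \<in> two_torsion (grpA N) \<Longrightarrow> u a \<in> carrier (mod2 (grpC N'))"
    using uh hom_in_carrier by fastforce
  have um: "\<And>a a'. a \<in> two_torsion (grpA N) \<Longrightarrow> a' \<in> two_torsion (grpA N) \<Longrightarrow>
      u (a \<otimes>\<^bsub>grpA N\<^esub> a') = u a \<otimes>\<^bsub>mod2 (grpC N')\<^esub> u a'"
    using uh by (metis carrier_tors2 hom_mult mult_tors2)
  have u1: "u \<one>\<^bsub>grpA N\<^esub> = twice (grpC N')"
    using hom_one'[OF uh N.A.tors2_comm_group[THEN comm_group.axioms(2)] N'.C.mod2_group]
    by (simp add: one_mod2)
  have rep_eq: "\<And>X. (SOME x. x \<in> X) = N'.rep X" by (simp add: N'.rep_def)
  let ?g = "\<lambda>b\<in>carrier (grpB N). chi N' (N'.rep (u (psi N b)))"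
  have "?g \<in> hom (grpB N) (grpB N')"
  proof (rule homI)
    fix b assume "b \<in> carrier (grpB N)"
    then show "?g b \<in> carrier (grpB N')" using N'.chibar_closed uc N.psi_tors by simp
  next
    fix b b' assume b: "b \<in> carrier (grpB N)" and b': "b' \<in> carrier (grpB N)"
    then show "?g (b \<otimes>\<^bsub>grpB N\<^esub> b') = ?g b \<otimes>\<^bsub>grpB N'\<^esub> ?g b'"
      by (simp add: N.psi_mult um N.psi_tors N'.chibar_mult uc)
  qed
  moreover have "?g \<in> extensional (carrier (grpB N))" by simp
  ultimately show ?thesis
    unfolding xi_def eeed_hom_def rep_eq
    using hom_zero_ghom[OF N.A.is_group N'.A.is_group] hom_zero_ghom[OF N.C.is_group N'.C.is_group]
    by (auto simp: ghom_def hom_zero_apply N.psi_tors uc N'.psi_chi N'.rep_c N.psi_chi u1 N'.chibar_one)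
qed


lemma hom_add_zero: "group H \<Longrightarrow> hom_add G H (hom_zero G H) (hom_zero G H) = hom_zero G H"
  by (auto simp: hom_add_def hom_zero_def group.is_monoid intro!: restrict_ext)

lemma xi_add:
  assumes "eL N" "eL N'" "u \<in> ghom (tors2 (grpA N)) (mod2 (grpC N'))" "v \<in> ghom (tors2 (grpA N)) (mod2 (grpC N'))"
  shows "xi N N' (hom_add (tors2 (grpA N)) (mod2 (grpC N')) u v) = eeed_add N N' (xi N N' u) (xi N N' v)"
proof -
  interpret N: eL N by fact
  interpret N': eL N' by fact
  have uc: "\<And>a. a \<in> two_torsion (grpA N) \<Longrightarrow> u a \<in> carrier (mod2 (grpC N'))"
    using assms(3) ghomD hom_in_carrier by fastforce
  have vc: "\<And>a. a \<in> two_torsion (grpA N) \<Longrightarrow> v a \<in> carrier (mod2 (grpC N'))"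
    using assms(4) ghomD hom_in_carrier by fastforce
  have rep_eq: "\<And>X. (SOME x. x \<in> X) = N'.rep X" by (simp add: N'.rep_def)
  have "(\<lambda>b\<in>carrier (grpB N). chi N' (N'.rep (hom_add (tors2 (grpA N)) (mod2 (grpC N')) u v (psi N b))))
     = hom_add (grpB N) (grpB N') (\<lambda>b\<in>carrier (grpB N). chi N' (N'.rep (u (psi N b))))
          (\<lambda>b\<in>carrier (grpB N). chi N' (N'.rep (v (psi N b))))"
    by (auto simp: hom_add_def N.psi_tors N'.chibar_mult uc vc intro!: restrict_ext)
  then show ?thesis
    by (simp add: xi_def eeed_add_def rep_eq hom_add_zero N'.A.is_group N'.C.is_group)
qed

lemma pi_add: "pi_mor (eeed_add N N' m m') = ed_add (pi_obj N) (pi_obj N') (pi_mor m) (pi_mor m')"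
  by (cases m; cases m') (simp add: pi_mor_def eeed_add_def ed_add_def)

lemma xi_inj:
  assumes "eL N" "eL N'"
  shows "inj_on (xi N N') (ghom (tors2 (grpA N)) (mod2 (grpC N')))"
proof (rule inj_onI)
  interpret N: eL N by fact
  interpret N': eL N' by fact
  fix u v assume u: "u \<in> ghom (tors2 (grpA N)) (mod2 (grpC N'))" and v: "v \<in> ghom (tors2 (grpA N)) (mod2 (grpC N'))"
    and eq: "xi N N' u = xi N N' v"
  have uc: "\<And>a. a \<in> two_torsion (grpA N) \<Longrightarrow> u a \<in> carrier (mod2 (grpC N'))"
    using u ghomD hom_in_carrier by fastforce
  have vc: "\<And>a. a \<in> two_torsion (grpA N) \<Longrightarrow> v a \<in> carrier (mod2 (grpC N'))"
    using v ghomD hom_in_carrier by fastforce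
  have rep_eq: "\<And>X. (SOME x. x \<in> X) = N'.rep X" by (simp add: N'.rep_def)
  have "\<And>b. b \<in> carrier (grpB N) \<Longrightarrow> chi N' (N'.rep (u (psi N b))) = chi N' (N'.rep (v (psi N b)))"
  proof -
    fix b assume b: "b \<in> carrier (grpB N)"
    from eq have "(\<lambda>b\<in>carrier (grpB N). chi N' (N'.rep (u (psi N b)))) b = (\<lambda>b\<in>carrier (grpB N). chi N' (N'.rep (v (psi N b)))) b"
      by (simp add: xi_def rep_eq)
    then show "chi N' (N'.rep (u (psi N b))) = chi N' (N'.rep (v (psi N b)))" using b by simp
  qed
  then have pt: "\<And>a. a \<in> two_torsion (grpA N) \<Longrightarrow> u a = v a"
  proof -
    fix a assume a: "a \<in> two_torsion (grpA N)"
    obtain b where b: "b \<in> carrier (grpB N)" "psi N b = a" using N.psi_onto[OF a] by blast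
    show "u a = v a"
      using N'.chibar_inj[OF uc[OF a] vc[OF a]] \<open>\<And>b. b \<in> carrier (grpB N) \<Longrightarrow> _\<close>[OF b(1)] b(2) by simp
  qed
  show "u = v"
    using ghomD(2)[OF u] ghomD(2)[OF v] pt by (simp add: extensionalityI)
qed


lemma eeed_homD:
  assumes "(f, g, h) \<in> eeed_hom N N'"
  shows "f \<in> hom (grpA N) (grpA N')" "f \<in> extensional (carrier (grpA N))"
    "g \<in> hom (grpB N) (grpB N')" "g \<in> extensional (carrier (grpB N))"
    "h \<in> hom (grpC N) (grpC N')" "h \<in> extensional (carrier (grpC N))"
    "\<And>b. b \<in> carrier (grpB N) \<Longrightarrow> f (psi N b) = psi N' (g b)"
    "\<And>a. a \<in> carrier (grpA N) \<Longrightarrow> h (eta N a) = eta N' (f a)"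
    "\<And>c. c \<in> carrier (grpC N) \<Longrightarrow> g (chi N c) = chi N' (h c)"
  using assms by (auto simp: eeed_hom_def ghom_def)

lemma xi_image:
  assumes "eL N" "eL N'"
  shows "xi N N' ` ghom (tors2 (grpA N)) (mod2 (grpC N')) = {m \<in> eeed_hom N N'. pi_mor m = ed_zero (pi_obj N) (pi_obj N')}"
proof (intro equalityI subsetI)
  interpret N: eL N by fact
  interpret N': eL N' by fact
  fix m assume "m \<in> xi N N' ` ghom (tors2 (grpA N)) (mod2 (grpC N'))"
  then obtain u where u: "u \<in> ghom (tors2 (grpA N)) (mod2 (grpC N'))" "m = xi N N' u" by blast
  then show "m \<in> {m \<in> eeed_hom N N'. pi_mor m = ed_zero (pi_obj N) (pi_obj N')}"
    using xi_hom[OF assms u(1)] by (simp add: xi_def pi_mor_def ed_zero_def)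
next
  interpret N: eL N by fact
  interpret N': eL N' by fact
  fix m assume "m \<in> {m \<in> eeed_hom N N'. pi_mor m = ed_zero (pi_obj N) (pi_obj N')}"
  then obtain g where m: "m = (hom_zero (grpA N) (grpA N'), g, hom_zero (grpC N) (grpC N'))"
      and mh: "(hom_zero (grpA N) (grpA N'), g, hom_zero (grpC N) (grpC N')) \<in> eeed_hom N N'"
    by (cases m) (auto simp: pi_mor_def ed_zero_def)
  note D = eeed_homD[OF mh]
  have gc: "\<And>b. b \<in> carrier (grpB N) \<Longrightarrow> g b \<in> carrier (grpB N')"
    by (rule hom_in_carrier[OF D(3)])
  have gm: "\<And>b b'. b \<in> carrier (grpB N) \<Longrightarrow> b' \<in> carrier (grpB N) \<Longrightarrow> g (b \<otimes>\<^bsub>grpB N\<^esub> b') = g b \<otimes>\<^bsub>grpB N'\<^esub> g b'"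
    by (rule hom_mult[OF D(3)])
  have ginv: "\<And>b. b \<in> carrier (grpB N) \<Longrightarrow> g (inv\<^bsub>grpB N\<^esub> b) = inv\<^bsub>grpB N'\<^esub> (g b)"
    by (rule hom_inv'[OF D(3) N.B.is_group N'.B.is_group])
  have gchi: "\<And>c. c \<in> carrier (grpC N) \<Longrightarrow> g (chi N c) = \<one>\<^bsub>grpB N'\<^esub>"
    using D(9) by (simp add: hom_zero_apply)
  have gpsi: "\<And>b. b \<in> carrier (grpB N) \<Longrightarrow> psi N' (g b) = \<one>\<^bsub>grpA N'\<^esub>"
    using D(7) by (simp add: hom_zero_apply)
  define bsel where "bsel a = (SOME b. b \<in> carrier (grpB N) \<and> psi N b = a)" for a
  define csel where "csel b' = (SOME c'. c' \<in> carrier (grpC N') \<and> chi N' c' = b')" for b'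
  define u where "u = (\<lambda>a\<in>two_torsion (grpA N). twice (grpC N') #>\<^bsub>grpC N'\<^esub> csel (g (bsel a)))"
  have bsel: "\<And>a. a \<in> two_torsion (grpA N) \<Longrightarrow> bsel a \<in> carrier (grpB N) \<and> psi N (bsel a) = a"
  proof -
    fix a assume "a \<in> two_torsion (grpA N)"
    then have "\<exists>b. b \<in> carrier (grpB N) \<and> psi N b = a" using N.psi_onto by blast
    then show "bsel a \<in> carrier (grpB N) \<and> psi N (bsel a) = a" unfolding bsel_def by (rule someI_ex)
  qed
  have csel: "\<And>b. b \<in> carrier (grpB N) \<Longrightarrow> csel (g b) \<in> carrier (grpC N') \<and> chi N' (csel (g b)) = g b"
  proof -
    fix b assume "b \<in> carrier (grpB N)"
    then have "\<exists>c'. c' \<in> carrier (grpC N') \<and> chi N' c' = g b" using N'.ker_psi[OF gc gpsi] by blast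
    then show "csel (g b) \<in> carrier (grpC N') \<and> chi N' (csel (g b)) = g b" unfolding csel_def by (rule someI_ex)
  qed
  have gb_eq: "\<And>b b'. b \<in> carrier (grpB N) \<Longrightarrow> b' \<in> carrier (grpB N) \<Longrightarrow> psi N b = psi N b' \<Longrightarrow> g b = g b'"
  proof -
    fix b b' assume b: "b \<in> carrier (grpB N)" and b': "b' \<in> carrier (grpB N)" and e: "psi N b = psi N b'"
    have "psi N (b \<otimes>\<^bsub>grpB N\<^esub> inv\<^bsub>grpB N\<^esub> b') = \<one>\<^bsub>grpA N\<^esub>"
      using b b' e by (simp add: N.psi_mult N.psi_inv N.A.eq_iff_inv)
    then obtain c where c: "c \<in> carrier (grpC N)" "chi N c = b \<otimes>\<^bsub>grpB N\<^esub> inv\<^bsub>grpB N\<^esub> b'"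
      using N.ker_psi[of "b \<otimes>\<^bsub>grpB N\<^esub> inv\<^bsub>grpB N\<^esub> b'"] b b' by auto
    have "g b \<otimes>\<^bsub>grpB N'\<^esub> inv\<^bsub>grpB N'\<^esub> g b' = \<one>\<^bsub>grpB N'\<^esub>"
      using gchi[OF c(1)] c(2) b b' by (simp add: gm ginv)
    then show "g b = g b'" using b b' gc N'.B.eq_iff_inv by blast
  qed
  have K: "\<And>a b c'. a \<in> two_torsion (grpA N) \<Longrightarrow> b \<in> carrier (grpB N) \<Longrightarrow> psi N b = a \<Longrightarrow>
      c' \<in> carrier (grpC N') \<Longrightarrow> chi N' c' = g b \<Longrightarrow> u a = twice (grpC N') #>\<^bsub>grpC N'\<^esub> c'"
  proof -
    fix a b c' assume a: "a \<in> two_torsion (grpA N)" and b: "b \<in> carrier (grpB N)" "psi N b = a"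
      and c': "c' \<in> carrier (grpC N')" "chi N' c' = g b"
    have ba: "bsel a \<in> carrier (grpB N)" "psi N (bsel a) = a" using bsel[OF a] by auto
    have e1: "g (bsel a) = g b" using gb_eq[OF ba(1) b(1)] ba(2) b(2) by simp
    have cs: "csel (g (bsel a)) \<in> carrier (grpC N')" "chi N' (csel (g (bsel a))) = g (bsel a)"
      using csel[OF ba(1)] by auto
    have "chi N' (csel (g (bsel a))) = chi N' c'" using cs(2) e1 c'(2) by simp
    then have "twice (grpC N') #>\<^bsub>grpC N'\<^esub> csel (g (bsel a)) = twice (grpC N') #>\<^bsub>grpC N'\<^esub> c'"
      using N'.chi_cls_eq[OF cs(1) c'(1)] by simp
    then show "u a = twice (grpC N') #>\<^bsub>grpC N'\<^esub> c'"
      using a unfolding u_def by simp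
  qed
  have ucl: "\<And>a. a \<in> two_torsion (grpA N) \<Longrightarrow> u a \<in> carrier (mod2 (grpC N'))"
    unfolding u_def using csel bsel N'.C.cls_closed by simp
  have "u \<in> hom (tors2 (grpA N)) (mod2 (grpC N'))"
  proof (rule homI)
    fix a assume "a \<in> carrier (tors2 (grpA N))" then show "u a \<in> carrier (mod2 (grpC N'))" using ucl by simp
  next
    fix a a' assume a: "a \<in> carrier (tors2 (grpA N))" and a': "a' \<in> carrier (tors2 (grpA N))"
    let ?b = "bsel a" and ?b' = "bsel a'"
    let ?c = "csel (g ?b)" and ?c' = "csel (g ?b')"
    have bb: "?b \<in> carrier (grpB N)" "psi N ?b = a" "?b' \<in> carrier (grpB N)" "psi N ?b' = a'"
      using bsel a a' by auto
    have cc: "?c \<in> carrier (grpC N')" "chi N' ?c = g ?b" "?c' \<in> carrier (grpC N')" "chi N' ?c' = g ?b'"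
      using csel bb by auto
    have aa: "a \<otimes>\<^bsub>grpA N\<^esub> a' \<in> two_torsion (grpA N)"
      using a a' N.A.two_torsion_subgroup subgroup.m_closed by fastforce
    have "u (a \<otimes>\<^bsub>grpA N\<^esub> a') = twice (grpC N') #>\<^bsub>grpC N'\<^esub> (?c \<otimes>\<^bsub>grpC N'\<^esub> ?c')"
      by (rule K[OF aa, of "?b \<otimes>\<^bsub>grpB N\<^esub> ?b'"]) (use bb cc in \<open>simp_all add: N.psi_mult gm N'.chi_mult\<close>)
    also have "\<dots> = u a \<otimes>\<^bsub>mod2 (grpC N')\<^esub> u a'"
      using K[of a ?b ?c] K[of a' ?b' ?c'] bb cc a a' by (simp add: N'.C.cls_mult)
    finally show "u (a \<otimes>\<^bsub>tors2 (grpA N)\<^esub> a') = u a \<otimes>\<^bsub>mod2 (grpC N')\<^esub> u a'" by simp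
  qed
  then have uH: "u \<in> ghom (tors2 (grpA N)) (mod2 (grpC N'))" by (simp add: ghom_def u_def)
  have "(\<lambda>b\<in>carrier (grpB N). chi N' (SOME x. x \<in> u (psi N b))) = g"
  proof (rule extensionalityI[OF _ D(4)])
    show "(\<lambda>b\<in>carrier (grpB N). chi N' (SOME x. x \<in> u (psi N b))) \<in> extensional (carrier (grpB N))" by simp
    fix b assume b: "b \<in> carrier (grpB N)"
    have "u (psi N b) = twice (grpC N') #>\<^bsub>grpC N'\<^esub> csel (g b)"
      using K[OF N.psi_tors[OF b] b refl] csel[OF b] by blast
    then show "(\<lambda>b\<in>carrier (grpB N). chi N' (SOME x. x \<in> u (psi N b))) b = g b"
      using b csel[OF b] N'.chibar_cls unfolding N'.rep_def by simp
  qed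
  then have "xi N N' u = m" by (simp add: xi_def m)
  then show "m \<in> xi N N' ` ghom (tors2 (grpA N)) (mod2 (grpC N'))" using uH by blast
qed

lemma compose_idD: "compose S f' f = (\<lambda>x\<in>S. x) \<Longrightarrow> x \<in> S \<Longrightarrow> f' (f x) = x"
  by (drule fun_cong[of _ _ x]) (simp add: compose_def)

lemma reflect_iso:
  assumes "eL N" "eL N'" and mh: "(f, g, h) \<in> eeed_hom N N'"
    and iso: "ed_iso (pi_obj N) (pi_obj N') (f, h)"
  shows "eeed_iso N N' (f, g, h)"
proof -
  interpret N: eL N by fact
  interpret N': eL N' by fact
  note D = eeed_homD[OF mh]
  obtain f' h' where m': "(f', h') \<in> ed_hom (pi_obj N') (pi_obj N)"
    and c1: "ed_comp (pi_obj N) (f', h') (f, h) = ed_id (pi_obj N)"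
    and c2: "ed_comp (pi_obj N') (f, h) (f', h') = ed_id (pi_obj N')"
    using iso unfolding ed_iso_def by auto
  have f'h: "f' \<in> hom (grpA N') (grpA N)" and f'e: "f' \<in> extensional (carrier (grpA N'))"
    and h'h: "h' \<in> hom (grpC N') (grpC N)" and h'e: "h' \<in> extensional (carrier (grpC N'))"
    and h'eta: "\<And>a. a \<in> carrier (grpA N') \<Longrightarrow> h' (eta N' a) = eta N (f' a)"
    using m' by (auto simp: ed_hom_def ghom_def)
  have cf: "compose (carrier (grpA N)) f' f = (\<lambda>x\<in>carrier (grpA N). x)"
   and ch: "compose (carrier (grpC N)) h' h = (\<lambda>x\<in>carrier (grpC N). x)"
    using c1 by (simp_all add: ed_comp_def ed_id_def)
  have cf': "compose (carrier (grpA N')) f f' = (\<lambda>x\<in>carrier (grpA N'). x)"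
   and ch': "compose (carrier (grpC N')) h h' = (\<lambda>x\<in>carrier (grpC N'). x)"
    using c2 by (simp_all add: ed_comp_def ed_id_def)
  have ff: "\<And>a. a \<in> carrier (grpA N) \<Longrightarrow> f' (f a) = a" using compose_idD[OF cf] .
  have hh: "\<And>c. c \<in> carrier (grpC N) \<Longrightarrow> h' (h c) = c" using compose_idD[OF ch] .
  have ff': "\<And>a. a \<in> carrier (grpA N') \<Longrightarrow> f (f' a) = a" using compose_idD[OF cf'] .
  have hh': "\<And>c. c \<in> carrier (grpC N') \<Longrightarrow> h (h' c) = c" using compose_idD[OF ch'] .
  have fc: "\<And>a. a \<in> carrier (grpA N) \<Longrightarrow> f a \<in> carrier (grpA N')" by (rule hom_in_carrier[OF D(1)])
  have f'c: "\<And>a. a \<in> carrier (grpA N') \<Longrightarrow> f' a \<in> carrier (grpA N)" by (rule hom_in_carrier[OF f'h])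
  have hc: "\<And>a. a \<in> carrier (grpC N) \<Longrightarrow> h a \<in> carrier (grpC N')" by (rule hom_in_carrier[OF D(5)])
  have h'c: "\<And>a. a \<in> carrier (grpC N') \<Longrightarrow> h' a \<in> carrier (grpC N)" by (rule hom_in_carrier[OF h'h])
  have gc: "\<And>b. b \<in> carrier (grpB N) \<Longrightarrow> g b \<in> carrier (grpB N')" by (rule hom_in_carrier[OF D(3)])
  have gm: "\<And>b b'. b \<in> carrier (grpB N) \<Longrightarrow> b' \<in> carrier (grpB N) \<Longrightarrow> g (b \<otimes>\<^bsub>grpB N\<^esub> b') = g b \<otimes>\<^bsub>grpB N'\<^esub> g b'"
    by (rule hom_mult[OF D(3)])
  have ginv: "\<And>b. b \<in> carrier (grpB N) \<Longrightarrow> g (inv\<^bsub>grpB N\<^esub> b) = inv\<^bsub>grpB N'\<^esub> (g b)"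
    by (rule hom_inv'[OF D(3) N.B.is_group N'.B.is_group])
  have f'1: "f' \<one>\<^bsub>grpA N'\<^esub> = \<one>\<^bsub>grpA N\<^esub>" by (rule hom_one'[OF f'h N'.A.is_group N.A.is_group])
  have h1: "h \<one>\<^bsub>grpC N\<^esub> = \<one>\<^bsub>grpC N'\<^esub>" by (rule hom_one'[OF D(5) N.C.is_group N'.C.is_group])
  have g1: "g \<one>\<^bsub>grpB N\<^esub> = \<one>\<^bsub>grpB N'\<^esub>" by (rule hom_one'[OF D(3) N.B.is_group N'.B.is_group])
  have ker: "\<And>x. x \<in> carrier (grpB N) \<Longrightarrow> g x = \<one>\<^bsub>grpB N'\<^esub> \<Longrightarrow> x = \<one>\<^bsub>grpB N\<^esub>"
  proof -
    fix x assume x: "x \<in> carrier (grpB N)" and gx: "g x = \<one>\<^bsub>grpB N'\<^esub>"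
    have "f (psi N x) = \<one>\<^bsub>grpA N'\<^esub>" using D(7)[OF x] gx by simp
    then have "psi N x = \<one>\<^bsub>grpA N\<^esub>" using ff[of "psi N x"] x f'1 by simp
    then obtain c where c: "c \<in> carrier (grpC N)" "chi N c = x" using N.ker_psi[OF x] by blast
    have "chi N' (h c) = \<one>\<^bsub>grpB N'\<^esub>" using D(9)[OF c(1)] c(2) gx by simp
    then have "h c \<in> twice (grpC N')" using N'.ker_chi hc c(1) by simp
    then obtain d where d: "d \<in> carrier (grpC N')" "h c = d \<otimes>\<^bsub>grpC N'\<^esub> d" by (auto simp: twice_def)
    have "c = h' d \<otimes>\<^bsub>grpC N\<^esub> h' d" using hh[OF c(1)] d hom_mult[OF h'h] by metis
    then have "c \<in> twice (grpC N)" using h'c[OF d(1)] by (auto simp: twice_def)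
    then show "x = \<one>\<^bsub>grpB N\<^esub>" using N.chi_twice c(2) by simp
  qed
  have inj: "inj_on g (carrier (grpB N))"
  proof (rule inj_onI)
    fix x y assume x: "x \<in> carrier (grpB N)" and y: "y \<in> carrier (grpB N)" and e: "g x = g y"
    have "g (x \<otimes>\<^bsub>grpB N\<^esub> inv\<^bsub>grpB N\<^esub> y) = \<one>\<^bsub>grpB N'\<^esub>"
      using x y e gc by (simp add: gm ginv)
    then have "x \<otimes>\<^bsub>grpB N\<^esub> inv\<^bsub>grpB N\<^esub> y = \<one>\<^bsub>grpB N\<^esub>" using ker x y by simp
    then show "x = y" using x y N.B.eq_iff_inv by simp
  qed
  have surj: "\<And>y. y \<in> carrier (grpB N') \<Longrightarrow> y \<in> g ` carrier (grpB N)"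
  proof -
    fix y assume y: "y \<in> carrier (grpB N')"
    let ?a' = "psi N' y"
    have a'c: "?a' \<in> two_torsion (grpA N')" using N'.psi_tors[OF y] .
    let ?a = "f' ?a'"
    have "?a \<otimes>\<^bsub>grpA N\<^esub> ?a = \<one>\<^bsub>grpA N\<^esub>"
      using a'c f'1 hom_mult[OF f'h, of ?a' ?a'] by (simp add: two_torsion_def)
    then have aT: "?a \<in> two_torsion (grpA N)" by (simp add: two_torsion_def f'c[OF N'.tors_c[OF a'c]])
    obtain b where b: "b \<in> carrier (grpB N)" "psi N b = ?a" using N.psi_onto[OF aT] by blast
    have gbc: "g b \<in> carrier (grpB N')" using gc[OF b(1)] .
    let ?x = "y \<otimes>\<^bsub>grpB N'\<^esub> inv\<^bsub>grpB N'\<^esub> g b"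
    have xc: "?x \<in> carrier (grpB N')" using y gbc by simp
    have pg: "psi N' (g b) = ?a'" using D(7)[OF b(1)] b(2) ff'[OF N'.tors_c[OF a'c]] by simp
    have "psi N' ?x = psi N' y \<otimes>\<^bsub>grpA N'\<^esub> inv\<^bsub>grpA N'\<^esub> psi N' (g b)"
      using N'.psi_mult[OF y N'.B.inv_closed[OF gbc]] N'.psi_inv[OF gbc] by simp
    also have "\<dots> = \<one>\<^bsub>grpA N'\<^esub>" unfolding pg using N'.psi_c[OF y] by (rule N'.A.r_inv)
    finally have px: "psi N' ?x = \<one>\<^bsub>grpA N'\<^esub>" .
    obtain c' where c': "c' \<in> carrier (grpC N')" "chi N' c' = ?x" using N'.ker_psi[OF xc px] by blast
    have hc': "h' c' \<in> carrier (grpC N)" using h'c[OF c'(1)] .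
    have "?x = g (chi N (h' c'))" using D(9)[OF hc'] hh'[OF c'(1)] c'(2) by simp
    then have e: "g (chi N (h' c')) = y \<otimes>\<^bsub>grpB N'\<^esub> inv\<^bsub>grpB N'\<^esub> g b" by simp
    have gcc: "g (chi N (h' c')) \<in> carrier (grpB N')" using gc[OF N.chi_c[OF hc']] .
    have "y = g (chi N (h' c')) \<otimes>\<^bsub>grpB N'\<^esub> g b"
      using iffD1[OF N'.B.inv_solve_right[OF gcc y gbc] e] .
    also have "\<dots> = g (chi N (h' c') \<otimes>\<^bsub>grpB N\<^esub> b)"
      using gm[OF N.chi_c[OF hc'] b(1)] by simp
    finally show "y \<in> g ` carrier (grpB N)" using N.chi_c[OF hc'] b(1) by blast
  qed
  define g' where "g' = (\<lambda>y\<in>carrier (grpB N'). inv_into (carrier (grpB N)) g y)"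
  have g'c: "\<And>y. y \<in> carrier (grpB N') \<Longrightarrow> g' y \<in> carrier (grpB N)"
    unfolding g'_def using surj by (simp add: inv_into_into)
  have gg': "\<And>y. y \<in> carrier (grpB N') \<Longrightarrow> g (g' y) = y"
    unfolding g'_def using surj by (simp add: f_inv_into_f)
  have g'g: "\<And>x. x \<in> carrier (grpB N) \<Longrightarrow> g' (g x) = x"
    unfolding g'_def using inj gc by (simp add: inv_into_f_f)
  have g'h: "g' \<in> hom (grpB N') (grpB N)"
  proof (rule homI)
    fix y assume "y \<in> carrier (grpB N')" then show "g' y \<in> carrier (grpB N)" by (rule g'c)
  next
    fix y y' assume y: "y \<in> carrier (grpB N')" and y': "y' \<in> carrier (grpB N')"
    have "g' (y \<otimes>\<^bsub>grpB N'\<^esub> y') = g' (g (g' y \<otimes>\<^bsub>grpB N\<^esub> g' y'))"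
      using y y' g'c by (simp add: gm gg')
    then show "g' (y \<otimes>\<^bsub>grpB N'\<^esub> y') = g' y \<otimes>\<^bsub>grpB N\<^esub> g' y'" using y y' g'c g'g by simp
  qed
  have m'h: "(f', g', h') \<in> eeed_hom N' N"
    unfolding eeed_hom_def ghom_def
  proof (intro CollectI case_prodI conjI IntI ballI)
    show "f' \<in> hom (grpA N') (grpA N)" "f' \<in> extensional (carrier (grpA N'))"
      "h' \<in> hom (grpC N') (grpC N)" "h' \<in> extensional (carrier (grpC N'))" by fact+
    show "g' \<in> hom (grpB N') (grpB N)" by fact
    show "g' \<in> extensional (carrier (grpB N'))" by (simp add: g'_def)
    fix b assume b: "b \<in> carrier (grpB N')"
    have "psi N' b = f (psi N (g' b))" using D(7)[OF g'c[OF b]] gg'[OF b] by simp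
    then show "f' (psi N' b) = psi N (g' b)" using ff g'c b by simp
  next
    fix a assume "a \<in> carrier (grpA N')" then show "h' (eta N' a) = eta N (f' a)" by (rule h'eta)
  next
    fix c assume c: "c \<in> carrier (grpC N')"
    have "chi N' c = g (chi N (h' c))" using D(9)[OF h'c[OF c]] hh'[OF c] by simp
    then show "g' (chi N' c) = chi N (h' c)" using g'g h'c c by simp
  qed
  have cg: "compose (carrier (grpB N)) g' g = (\<lambda>x\<in>carrier (grpB N). x)"
    unfolding compose_def by (rule restrict_ext) (simp add: g'g)
  have cg': "compose (carrier (grpB N')) g g' = (\<lambda>x\<in>carrier (grpB N'). x)"
    unfolding compose_def by (rule restrict_ext) (simp add: gg')
  show ?thesis unfolding eeed_iso_def
    using mh m'h cf ch cf' ch' cg cg'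
    by (intro conjI bexI[of _ "(f', g', h')"]) (simp_all add: eeed_comp_def eeed_id_def)
qed


lemma nat_pi:
  "pi_mor (eeed_comp M (f2, g2, h2) (eeed_comp M m (f1, g1, h1)))
   = ed_comp (pi_obj M) (pi_mor (f2, g2, h2)) (ed_comp (pi_obj M) (pi_mor m) (pi_mor (f1, g1, h1)))"
  by (cases m) (simp add: pi_mor_def eeed_comp_def ed_comp_def)

lemma nat_xi:
  assumes "eL M" "eL N" "eL N'" "eL N''"
    and m1: "(f1, g1, h1) \<in> eeed_hom M N" and m2: "(f2, g2, h2) \<in> eeed_hom N' N''"
    and u: "u \<in> ghom (tors2 (grpA N)) (mod2 (grpC N'))"
  shows "xi M N'' (\<lambda>a\<in>two_torsion (grpA M). mod2_map (grpC N') (grpC N'') h2 (u (f1 a)))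
         = eeed_comp M (f2, g2, h2) (eeed_comp M (xi N N' u) (f1, g1, h1))"
proof -
  interpret M: eL M by fact
  interpret N: eL N by fact
  interpret N': eL N' by fact
  interpret N'': eL N'' by fact
  note D1 = eeed_homD[OF m1] and D2 = eeed_homD[OF m2]
  have uc: "\<And>a. a \<in> two_torsion (grpA N) \<Longrightarrow> u a \<in> carrier (mod2 (grpC N'))"
    using u ghomD hom_in_carrier by fastforce
  have f2one: "f2 \<one>\<^bsub>grpA N'\<^esub> = \<one>\<^bsub>grpA N''\<^esub>" by (rule hom_one'[OF D2(1) N'.A.is_group N''.A.is_group])
  have h2one: "h2 \<one>\<^bsub>grpC N'\<^esub> = \<one>\<^bsub>grpC N''\<^esub>" by (rule hom_one'[OF D2(5) N'.C.is_group N''.C.is_group])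
  have f1c: "\<And>a. a \<in> carrier (grpA M) \<Longrightarrow> f1 a \<in> carrier (grpA N)" by (rule hom_in_carrier[OF D1(1)])
  have h1c: "\<And>a. a \<in> carrier (grpC M) \<Longrightarrow> h1 a \<in> carrier (grpC N)" by (rule hom_in_carrier[OF D1(5)])
  have g1c: "\<And>a. a \<in> carrier (grpB M) \<Longrightarrow> g1 a \<in> carrier (grpB N)" by (rule hom_in_carrier[OF D1(3)])
  have h2c: "\<And>a. a \<in> carrier (grpC N') \<Longrightarrow> h2 a \<in> carrier (grpC N'')" by (rule hom_in_carrier[OF D2(5)])
  have ftors: "\<And>b. b \<in> carrier (grpB M) \<Longrightarrow> f1 (psi M b) \<in> two_torsion (grpA N)"
    using D1(7) g1c N.psi_tors by simp
  have A: "compose (carrier (grpA M)) f2 (compose (carrier (grpA M)) (hom_zero (grpA N) (grpA N')) f1)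
      = hom_zero (grpA M) (grpA N'')"
    unfolding compose_def hom_zero_def by (rule restrict_ext) (simp add: f1c f2one)
  have C: "compose (carrier (grpC M)) h2 (compose (carrier (grpC M)) (hom_zero (grpC N) (grpC N')) h1)
      = hom_zero (grpC M) (grpC N'')"
    unfolding compose_def hom_zero_def by (rule restrict_ext) (simp add: h1c h2one)
  have B: "(\<lambda>b\<in>carrier (grpB M). chi N'' (SOME x. x \<in> (\<lambda>a\<in>two_torsion (grpA M). mod2_map (grpC N') (grpC N'') h2 (u (f1 a))) (psi M b)))
    = compose (carrier (grpB M)) g2 (compose (carrier (grpB M)) (\<lambda>b\<in>carrier (grpB N). chi N' (SOME x. x \<in> u (psi N b))) g1)"
    unfolding compose_def
  proof (rule restrict_ext)
    fix b assume b: "b \<in> carrier (grpB M)"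
    let ?X = "u (f1 (psi M b))"
    have X: "?X \<in> carrier (mod2 (grpC N'))" using uc ftors b by simp
    have r: "N'.rep ?X \<in> carrier (grpC N')" using N'.rep_c[OF X] .
    have "mod2_map (grpC N') (grpC N'') h2 ?X = twice (grpC N'') #>\<^bsub>grpC N''\<^esub> h2 (N'.rep ?X)"
      using X by (simp add: mod2_map_def N'.rep_def)
    then have "chi N'' (N''.rep (mod2_map (grpC N') (grpC N'') h2 ?X)) = chi N'' (h2 (N'.rep ?X))"
      using N''.chibar_cls[OF h2c[OF r]] by simp
    also have "\<dots> = g2 (chi N' (N'.rep ?X))" using D2(9)[OF r] by simp
    finally show "chi N'' (SOME x. x \<in> (\<lambda>a\<in>two_torsion (grpA M). mod2_map (grpC N') (grpC N'') h2 (u (f1 a))) (psi M b))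
      = g2 ((\<lambda>x\<in>carrier (grpB M). (\<lambda>b\<in>carrier (grpB N). chi N' (SOME x. x \<in> u (psi N b))) (g1 x)) b)"
      using b g1c D1(7) M.psi_tors by (simp add: N'.rep_def N''.rep_def)
  qed
  show ?thesis using A B C by (simp add: xi_def eeed_comp_def)
qed

lemma full_sub: "pi_mor ` eeed_hom N N' \<subseteq> ed_hom (pi_obj N) (pi_obj N')"
  by (auto simp: pi_mor_def eeed_hom_def ed_hom_def)

lemma hom_extend:
  fixes G :: "'a monoid" and H :: "'b monoid"
  assumes G: "cg G" and H: "cg H"
    and S0G: "S0 \<subseteq> carrier G"
    and S0m: "\<And>x y. x \<in> S0 \<Longrightarrow> y \<in> S0 \<Longrightarrow> x \<otimes>\<^bsub>G\<^esub> y \<in> S0"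
    and S0i: "\<And>x. x \<in> S0 \<Longrightarrow> inv\<^bsub>G\<^esub> x \<in> S0"
    and S01: "\<one>\<^bsub>G\<^esub> \<in> S0"
    and g0c: "\<And>x. x \<in> S0 \<Longrightarrow> g0 x \<in> carrier H"
    and g0m: "\<And>x y. x \<in> S0 \<Longrightarrow> y \<in> S0 \<Longrightarrow> g0 (x \<otimes>\<^bsub>G\<^esub> y) = g0 x \<otimes>\<^bsub>H\<^esub> g0 y"
    and g0i: "\<And>x. x \<in> S0 \<Longrightarrow> g0 (inv\<^bsub>G\<^esub> x) = inv\<^bsub>H\<^esub> (g0 x)"
    and g01: "g0 \<one>\<^bsub>G\<^esub> = \<one>\<^bsub>H\<^esub>"
    and sq: "\<And>b. b \<in> carrier G \<Longrightarrow> b \<otimes>\<^bsub>G\<^esub> b \<in> S0"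
    and PS0: "\<And>s. s \<in> S0 \<Longrightarrow> P s (g0 s)"
    and Pm: "\<And>x y x' y'. x \<in> carrier G \<Longrightarrow> x' \<in> carrier G \<Longrightarrow> y \<in> carrier H \<Longrightarrow> y' \<in> carrier H \<Longrightarrow>
              P x y \<Longrightarrow> P x' y' \<Longrightarrow> P (x \<otimes>\<^bsub>G\<^esub> x') (y \<otimes>\<^bsub>H\<^esub> y')"
    and step: "\<And>b. b \<in> carrier G \<Longrightarrow> \<exists>b'. b' \<in> carrier H \<and> P b b' \<and> b' \<otimes>\<^bsub>H\<^esub> b' = g0 (b \<otimes>\<^bsub>G\<^esub> b)"
  shows "\<exists>g. g \<in> hom G H \<and> (\<forall>s\<in>S0. g s = g0 s) \<and> (\<forall>b\<in>carrier G. P b (g b))"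
proof -
  interpret G: cg G by fact
  interpret H: cg H by fact
  define good where "good R \<longleftrightarrow> R \<subseteq> carrier G \<times> carrier H \<and> (\<forall>s\<in>S0. (s, g0 s) \<in> R) \<and>
     (\<forall>x y x' y'. (x, y) \<in> R \<longrightarrow> (x', y') \<in> R \<longrightarrow> (x \<otimes>\<^bsub>G\<^esub> x', y \<otimes>\<^bsub>H\<^esub> y') \<in> R) \<and>
     (\<forall>x y. (x, y) \<in> R \<longrightarrow> (inv\<^bsub>G\<^esub> x, inv\<^bsub>H\<^esub> y) \<in> R) \<and>
     (\<forall>x y y'. (x, y) \<in> R \<longrightarrow> (x, y') \<in> R \<longrightarrow> y = y') \<and>
     (\<forall>x y. (x, y) \<in> R \<longrightarrow> P x y)" for R
  define R0 where "R0 = (\<lambda>s. (s, g0 s)) ` S0"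
  have goodR0: "good R0"
    unfolding good_def R0_def using S0G g0c S0m g0m S0i g0i PS0 by auto
  have "\<exists>M\<in>{R. good R}. \<forall>X\<in>{R. good R}. M \<subseteq> X \<longrightarrow> X = M"
  proof (rule Zorn_Lemma2, intro ballI)
    fix C assume C: "C \<in> chains {R. good R}"
    show "\<exists>U\<in>{R. good R}. \<forall>X\<in>C. X \<subseteq> U"
    proof (cases "C = {}")
      case True then show ?thesis using goodR0 by blast
    next
      case False
      have Cg: "\<And>R. R \<in> C \<Longrightarrow> good R" using C by (auto simp: chains_def)
      have ch: "\<And>R1 R2. R1 \<in> C \<Longrightarrow> R2 \<in> C \<Longrightarrow> R1 \<subseteq> R2 \<or> R2 \<subseteq> R1"
        using C by (auto simp: chains_def chain_subset_def)
      have CgM: "\<And>R x y x' y'. R \<in> C \<Longrightarrow> (x, y) \<in> R \<Longrightarrow> (x', y') \<in> R \<Longrightarrow> (x \<otimes>\<^bsub>G\<^esub> x', y \<otimes>\<^bsub>H\<^esub> y') \<in> R"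
        using Cg unfolding good_def by simp
      have CgI: "\<And>R x y. R \<in> C \<Longrightarrow> (x, y) \<in> R \<Longrightarrow> (inv\<^bsub>G\<^esub> x, inv\<^bsub>H\<^esub> y) \<in> R"
        using Cg unfolding good_def by simp
      have CgU: "\<And>R x y y'. R \<in> C \<Longrightarrow> (x, y) \<in> R \<Longrightarrow> (x, y') \<in> R \<Longrightarrow> y = y'"
        using Cg unfolding good_def by simp
      have CgP: "\<And>R x y. R \<in> C \<Longrightarrow> (x, y) \<in> R \<Longrightarrow> P x y"
        using Cg unfolding good_def by simp
      have CgS: "\<And>R s. R \<in> C \<Longrightarrow> s \<in> S0 \<Longrightarrow> (s, g0 s) \<in> R"
        using Cg unfolding good_def by simp
      have "good (\<Union>C)"
        unfolding good_def
      proof (intro conjI allI impI ballI)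
        show "\<Union>C \<subseteq> carrier G \<times> carrier H"
        proof
          fix p assume "p \<in> \<Union>C"
          then obtain R where R: "R \<in> C" "p \<in> R" by blast
          have "R \<subseteq> carrier G \<times> carrier H" using Cg[OF R(1)] unfolding good_def by simp
          then show "p \<in> carrier G \<times> carrier H" using R(2) by blast
        qed
      next
        fix s assume "s \<in> S0"
        obtain R where "R \<in> C" using False by blast
        then show "(s, g0 s) \<in> \<Union>C" using CgS \<open>s \<in> S0\<close> by blast
      next
        fix x y x' y' assume "(x, y) \<in> \<Union>C" "(x', y') \<in> \<Union>C"
        then obtain R1 R2 where "R1 \<in> C" "R2 \<in> C" "(x, y) \<in> R1" "(x', y') \<in> R2" by auto
        then show "(x \<otimes>\<^bsub>G\<^esub> x', y \<otimes>\<^bsub>H\<^esub> y') \<in> \<Union>C" using ch[of R1 R2] CgM[of R1] CgM[of R2]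
          by blast
      next
        fix x y assume "(x, y) \<in> \<Union>C"
        then obtain R1 where "R1 \<in> C" "(x, y) \<in> R1" by auto
        then show "(inv\<^bsub>G\<^esub> x, inv\<^bsub>H\<^esub> y) \<in> \<Union>C" using CgI by blast
      next
        fix x y y' assume "(x, y) \<in> \<Union>C" "(x, y') \<in> \<Union>C"
        then obtain R1 R2 where "R1 \<in> C" "R2 \<in> C" "(x, y) \<in> R1" "(x, y') \<in> R2" by auto
        then show "y = y'" using ch[of R1 R2] CgU[of R1] CgU[of R2] by blast
      next
        fix x y assume "(x, y) \<in> \<Union>C"
        then obtain R1 where "R1 \<in> C" "(x, y) \<in> R1" by auto
        then show "P x y" using CgP by blast
      qed
      then show ?thesis by blast
    qed
  qed
  then obtain M where gM: "good M" and maxM: "\<And>X. good X \<Longrightarrow> M \<subseteq> X \<Longrightarrow> X = M" by auto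
  have Msub: "M \<subseteq> carrier G \<times> carrier H" and MS0: "\<And>s. s \<in> S0 \<Longrightarrow> (s, g0 s) \<in> M"
    and Mm: "\<And>x y x' y'. (x, y) \<in> M \<Longrightarrow> (x', y') \<in> M \<Longrightarrow> (x \<otimes>\<^bsub>G\<^esub> x', y \<otimes>\<^bsub>H\<^esub> y') \<in> M"
    and Mi: "\<And>x y. (x, y) \<in> M \<Longrightarrow> (inv\<^bsub>G\<^esub> x, inv\<^bsub>H\<^esub> y) \<in> M"
    and Mu: "\<And>x y y'. (x, y) \<in> M \<Longrightarrow> (x, y') \<in> M \<Longrightarrow> y = y'"
    and MP: "\<And>x y. (x, y) \<in> M \<Longrightarrow> P x y"
    using gM unfolding good_def by blast+
  have dom: "\<And>b. b \<in> carrier G \<Longrightarrow> \<exists>y. (b, y) \<in> M"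
  proof (rule ccontr)
    fix b assume b: "b \<in> carrier G" and nb: "\<nexists>y. (b, y) \<in> M"
    obtain b' where b': "b' \<in> carrier H" "P b b'" "b' \<otimes>\<^bsub>H\<^esub> b' = g0 (b \<otimes>\<^bsub>G\<^esub> b)" using step[OF b] by blast
    have bb: "(b \<otimes>\<^bsub>G\<^esub> b, b' \<otimes>\<^bsub>H\<^esub> b') \<in> M" using MS0[OF sq[OF b]] b'(3) by simp
    define M' where "M' = M \<union> {(b \<otimes>\<^bsub>G\<^esub> x, b' \<otimes>\<^bsub>H\<^esub> y) | x y. (x, y) \<in> M}"
    have MG: "\<And>x y. (x, y) \<in> M \<Longrightarrow> x \<in> carrier G" and MH: "\<And>x y. (x, y) \<in> M \<Longrightarrow> y \<in> carrier H"
      using Msub by auto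
    have "good M'"
      unfolding good_def
    proof (intro conjI allI impI ballI)
      show "M' \<subseteq> carrier G \<times> carrier H" using Msub b b'(1) by (auto simp: M'_def)
    next
      fix s assume "s \<in> S0" then show "(s, g0 s) \<in> M'" using MS0 by (auto simp: M'_def)
    next
      fix x y x' y' assume xy: "(x, y) \<in> M'" and xy': "(x', y') \<in> M'"
      show "(x \<otimes>\<^bsub>G\<^esub> x', y \<otimes>\<^bsub>H\<^esub> y') \<in> M'"
      proof (cases "(x, y) \<in> M")
        case True note T1 = this
        show ?thesis
        proof (cases "(x', y') \<in> M")
          case True then show ?thesis using T1 Mm by (auto simp: M'_def)
        next
          case False
          then obtain x2 y2 where e: "x' = b \<otimes>\<^bsub>G\<^esub> x2" "y' = b' \<otimes>\<^bsub>H\<^esub> y2" "(x2, y2) \<in> M"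
            using xy' by (auto simp: M'_def)
          have "x \<otimes>\<^bsub>G\<^esub> x' = b \<otimes>\<^bsub>G\<^esub> (x \<otimes>\<^bsub>G\<^esub> x2)"
            using e MG[OF T1] MG[OF e(3)] b by (simp add: G.m_lcomm)
          moreover have "y \<otimes>\<^bsub>H\<^esub> y' = b' \<otimes>\<^bsub>H\<^esub> (y \<otimes>\<^bsub>H\<^esub> y2)"
            using e MH[OF T1] MH[OF e(3)] b'(1) by (simp add: H.m_lcomm)
          ultimately show ?thesis using Mm[OF T1 e(3)] by (auto simp: M'_def)
        qed
      next
        case False
        then obtain x1 y1 where e1: "x = b \<otimes>\<^bsub>G\<^esub> x1" "y = b' \<otimes>\<^bsub>H\<^esub> y1" "(x1, y1) \<in> M"
          using xy by (auto simp: M'_def)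
        show ?thesis
        proof (cases "(x', y') \<in> M")
          case True
          have "x \<otimes>\<^bsub>G\<^esub> x' = b \<otimes>\<^bsub>G\<^esub> (x1 \<otimes>\<^bsub>G\<^esub> x')"
            using e1 MG[OF True] MG[OF e1(3)] b by (simp add: G.m_assoc)
          moreover have "y \<otimes>\<^bsub>H\<^esub> y' = b' \<otimes>\<^bsub>H\<^esub> (y1 \<otimes>\<^bsub>H\<^esub> y')"
            using e1 MH[OF True] MH[OF e1(3)] b'(1) by (simp add: H.m_assoc)
          ultimately show ?thesis using Mm[OF e1(3) True] by (auto simp: M'_def)
        next
          case False
          then obtain x2 y2 where e: "x' = b \<otimes>\<^bsub>G\<^esub> x2" "y' = b' \<otimes>\<^bsub>H\<^esub> y2" "(x2, y2) \<in> M"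
            using xy' by (auto simp: M'_def)
          have "x \<otimes>\<^bsub>G\<^esub> x' = (b \<otimes>\<^bsub>G\<^esub> b) \<otimes>\<^bsub>G\<^esub> (x1 \<otimes>\<^bsub>G\<^esub> x2)"
            using e e1 MG[OF e(3)] MG[OF e1(3)] b by (simp add: G.m_ac)
          moreover have "y \<otimes>\<^bsub>H\<^esub> y' = (b' \<otimes>\<^bsub>H\<^esub> b') \<otimes>\<^bsub>H\<^esub> (y1 \<otimes>\<^bsub>H\<^esub> y2)"
            using e e1 MH[OF e(3)] MH[OF e1(3)] b'(1) by (simp add: H.m_ac)
          ultimately show ?thesis using Mm[OF bb Mm[OF e1(3) e(3)]] by (auto simp: M'_def)
        qed
      qed
    next
      fix x y assume xy: "(x, y) \<in> M'"
      show "(inv\<^bsub>G\<^esub> x, inv\<^bsub>H\<^esub> y) \<in> M'"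
      proof (cases "(x, y) \<in> M")
        case True then show ?thesis using Mi by (auto simp: M'_def)
      next
        case False
        then obtain x1 y1 where e1: "x = b \<otimes>\<^bsub>G\<^esub> x1" "y = b' \<otimes>\<^bsub>H\<^esub> y1" "(x1, y1) \<in> M"
          using xy by (auto simp: M'_def)
        have x1: "x1 \<in> carrier G" and y1: "y1 \<in> carrier H" using MG MH e1(3) by auto
        have cG: "\<And>z. z \<in> carrier G \<Longrightarrow> b \<otimes>\<^bsub>G\<^esub> (inv\<^bsub>G\<^esub> b \<otimes>\<^bsub>G\<^esub> z) = z"
          using b by (simp add: G.m_assoc[symmetric])
        have cH: "\<And>z. z \<in> carrier H \<Longrightarrow> b' \<otimes>\<^bsub>H\<^esub> (inv\<^bsub>H\<^esub> b' \<otimes>\<^bsub>H\<^esub> z) = z"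
          using b'(1) by (simp add: H.m_assoc[symmetric])
        have "inv\<^bsub>G\<^esub> x = b \<otimes>\<^bsub>G\<^esub> (inv\<^bsub>G\<^esub> (b \<otimes>\<^bsub>G\<^esub> b) \<otimes>\<^bsub>G\<^esub> inv\<^bsub>G\<^esub> x1)"
          using e1 x1 b by (simp add: G.inv_mult G.m_assoc cG)
        moreover have "inv\<^bsub>H\<^esub> y = b' \<otimes>\<^bsub>H\<^esub> (inv\<^bsub>H\<^esub> (b' \<otimes>\<^bsub>H\<^esub> b') \<otimes>\<^bsub>H\<^esub> inv\<^bsub>H\<^esub> y1)"
          using e1 y1 b'(1) by (simp add: H.inv_mult H.m_assoc cH)
        ultimately show ?thesis using Mm[OF Mi[OF bb] Mi[OF e1(3)]] by (auto simp: M'_def)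
      qed
    next
      fix x y y' assume xy: "(x, y) \<in> M'" and xy': "(x, y') \<in> M'"
      have noM: "\<And>x1 y1 x2 y2. (x1, y1) \<in> M \<Longrightarrow> (x2, y2) \<in> M \<Longrightarrow> x1 \<noteq> b \<otimes>\<^bsub>G\<^esub> x2"
      proof
        fix x1 y1 x2 y2 assume m1: "(x1, y1) \<in> M" and m2: "(x2, y2) \<in> M" and e: "x1 = b \<otimes>\<^bsub>G\<^esub> x2"
        have "b = x1 \<otimes>\<^bsub>G\<^esub> inv\<^bsub>G\<^esub> x2" using e MG[OF m2] b by (simp add: G.m_assoc)
        then have "(b, y1 \<otimes>\<^bsub>H\<^esub> inv\<^bsub>H\<^esub> y2) \<in> M" using Mm[OF m1 Mi[OF m2]] by simp
        then show False using nb by blast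
      qed
      show "y = y'"
      proof (cases "(x, y) \<in> M")
        case T1: True
        show ?thesis
        proof (cases "(x, y') \<in> M")
          case True then show ?thesis using Mu T1 by blast
        next
          case False
          then obtain x2 y2 where e: "x = b \<otimes>\<^bsub>G\<^esub> x2" "(x2, y2) \<in> M"
            using xy' by (auto simp: M'_def)
          then show ?thesis using noM[OF T1 e(2)] by blast
        qed
      next
        case False
        then obtain x1 y1 where e1: "x = b \<otimes>\<^bsub>G\<^esub> x1" "y = b' \<otimes>\<^bsub>H\<^esub> y1" "(x1, y1) \<in> M"
          using xy by (auto simp: M'_def)
        show ?thesis
        proof (cases "(x, y') \<in> M")
          case True then show ?thesis using noM[OF True e1(3)] e1(1) by blast
        next
          case False
          then obtain x2 y2 where e: "x = b \<otimes>\<^bsub>G\<^esub> x2" "y' = b' \<otimes>\<^bsub>H\<^esub> y2" "(x2, y2) \<in> M"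
            using xy' by (auto simp: M'_def)
          have "b \<otimes>\<^bsub>G\<^esub> x1 = b \<otimes>\<^bsub>G\<^esub> x2" using e(1) e1(1) by simp
          then have "x1 = x2" using MG[OF e(3)] MG[OF e1(3)] b by simp
          then show ?thesis using e e1 Mu by blast
        qed
      qed
    next
      fix x y assume xy: "(x, y) \<in> M'"
      show "P x y"
      proof (cases "(x, y) \<in> M")
        case True then show ?thesis using MP by blast
      next
        case False
        then obtain x1 y1 where e1: "x = b \<otimes>\<^bsub>G\<^esub> x1" "y = b' \<otimes>\<^bsub>H\<^esub> y1" "(x1, y1) \<in> M"
          using xy by (auto simp: M'_def)
        show ?thesis unfolding e1(1,2)
          by (rule Pm[OF b MG[OF e1(3)] b'(1) MH[OF e1(3)] b'(2) MP[OF e1(3)]])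
      qed
    qed
    moreover have "M \<subseteq> M'" by (auto simp: M'_def)
    ultimately have "M' = M" using maxM by blast
    moreover have "(b, b') \<in> M'"
    proof -
      have "(\<one>\<^bsub>G\<^esub>, \<one>\<^bsub>H\<^esub>) \<in> M" using MS0[OF S01] g01 by simp
      then show ?thesis using b b'(1) unfolding M'_def by force
    qed
    ultimately show False using nb by blast
  qed
  define g where "g x = (THE y. (x, y) \<in> M)" for x
  have gM': "\<And>x. x \<in> carrier G \<Longrightarrow> (x, g x) \<in> M"
  proof -
    fix x assume "x \<in> carrier G"
    then obtain y where y: "(x, y) \<in> M" using dom by blast
    have "(x, THE y. (x, y) \<in> M) \<in> M"
      by (rule theI[of "\<lambda>y. (x, y) \<in> M" y]) (use y Mu in auto)
    then show "(x, g x) \<in> M" unfolding g_def .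
  qed
  have gu: "\<And>x y. (x, y) \<in> M \<Longrightarrow> g x = y"
  proof -
    fix x y assume xy: "(x, y) \<in> M"
    then have "x \<in> carrier G" using Msub by blast
    then show "g x = y" using gM' Mu xy by blast
  qed
  have "g \<in> hom G H"
  proof (rule homI)
    fix x assume "x \<in> carrier G" then show "g x \<in> carrier H" using gM' Msub by blast
  next
    fix x y assume "x \<in> carrier G" "y \<in> carrier G"
    then show "g (x \<otimes>\<^bsub>G\<^esub> y) = g x \<otimes>\<^bsub>H\<^esub> g y" using gu[OF Mm[OF gM' gM']] by simp
  qed
  moreover have "\<forall>s\<in>S0. g s = g0 s" using MS0 gu by blast
  moreover have "\<forall>b\<in>carrier G. P b (g b)" using gM' MP by blast
  ultimately show ?thesis by blast
qed


lemma twice_hom: "h \<in> hom G H \<Longrightarrow> c \<in> twice G \<Longrightarrow> h c \<in> twice H"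
  by (auto simp: twice_def hom_mult hom_in_carrier)

lemma full:
  assumes "eL N" "eL N'" and fh: "(f, h) \<in> ed_hom (pi_obj N) (pi_obj N')"
  shows "\<exists>g. (f, g, h) \<in> eeed_hom N N'"
proof -
  interpret N: eL N by fact
  interpret N': eL N' by fact
  have fH: "f \<in> hom (grpA N) (grpA N')" and fE: "f \<in> extensional (carrier (grpA N))"
    and hH: "h \<in> hom (grpC N) (grpC N')" and hE: "h \<in> extensional (carrier (grpC N))"
    and heta: "\<And>a. a \<in> carrier (grpA N) \<Longrightarrow> h (eta N a) = eta N' (f a)"
    using fh by (auto simp: ed_hom_def ghom_def)
  have fc: "\<And>a. a \<in> carrier (grpA N) \<Longrightarrow> f a \<in> carrier (grpA N')" by (rule hom_in_carrier[OF fH])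
  have hc: "\<And>a. a \<in> carrier (grpC N) \<Longrightarrow> h a \<in> carrier (grpC N')" by (rule hom_in_carrier[OF hH])
  have f1: "f \<one>\<^bsub>grpA N\<^esub> = \<one>\<^bsub>grpA N'\<^esub>" by (rule hom_one'[OF fH N.A.is_group N'.A.is_group])
  have h1: "h \<one>\<^bsub>grpC N\<^esub> = \<one>\<^bsub>grpC N'\<^esub>" by (rule hom_one'[OF hH N.C.is_group N'.C.is_group])
  have hi: "\<And>c. c \<in> carrier (grpC N) \<Longrightarrow> h (inv\<^bsub>grpC N\<^esub> c) = inv\<^bsub>grpC N'\<^esub> (h c)"
    by (rule hom_inv'[OF hH N.C.is_group N'.C.is_group])
  define S0 where "S0 = chi N ` carrier (grpC N)"
  define g0 where "g0 b = chi N' (h (SOME c. c \<in> carrier (grpC N) \<and> chi N c = b))" for b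
  have wd: "\<And>c c0. c \<in> carrier (grpC N) \<Longrightarrow> c0 \<in> carrier (grpC N) \<Longrightarrow> chi N c = chi N c0 \<Longrightarrow>
      chi N' (h c) = chi N' (h c0)"
  proof -
    fix c c0 assume c: "c \<in> carrier (grpC N)" and c0: "c0 \<in> carrier (grpC N)" and e: "chi N c = chi N c0"
    have "c \<otimes>\<^bsub>grpC N\<^esub> inv\<^bsub>grpC N\<^esub> c0 \<in> twice (grpC N)"
      using N.chi_cls_eq[OF c c0] e N.C.cls_eq_iff[OF c c0] by simp
    then have "h (c \<otimes>\<^bsub>grpC N\<^esub> inv\<^bsub>grpC N\<^esub> c0) \<in> twice (grpC N')" by (rule twice_hom[OF hH])
    then have "h c \<otimes>\<^bsub>grpC N'\<^esub> inv\<^bsub>grpC N'\<^esub> h c0 \<in> twice (grpC N')"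
      using c c0 by (simp add: hom_mult[OF hH] hi)
    then show "chi N' (h c) = chi N' (h c0)"
      using N'.chi_cls_eq[OF hc[OF c] hc[OF c0]] N'.C.cls_eq_iff[OF hc[OF c] hc[OF c0]] by simp
  qed
  have g0chi: "\<And>c. c \<in> carrier (grpC N) \<Longrightarrow> g0 (chi N c) = chi N' (h c)"
  proof -
    fix c assume c: "c \<in> carrier (grpC N)"
    have "\<exists>c0. c0 \<in> carrier (grpC N) \<and> chi N c0 = chi N c" using c by blast
    then have s: "(SOME c0. c0 \<in> carrier (grpC N) \<and> chi N c0 = chi N c) \<in> carrier (grpC N) \<and>
        chi N (SOME c0. c0 \<in> carrier (grpC N) \<and> chi N c0 = chi N c) = chi N c" by (rule someI_ex)
    show "g0 (chi N c) = chi N' (h c)" unfolding g0_def using wd[OF _ c] s by blast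
  qed
  have "\<exists>g. g \<in> hom (grpB N) (grpB N') \<and> (\<forall>s\<in>S0. g s = g0 s) \<and>
         (\<forall>b\<in>carrier (grpB N). psi N' (g b) = f (psi N b))"
  proof (rule hom_extend[OF N.cgB N'.cgB, where P = "\<lambda>b b'. psi N' b' = f (psi N b)"])
    show "S0 \<subseteq> carrier (grpB N)" unfolding S0_def by auto
    show "\<And>x y. x \<in> S0 \<Longrightarrow> y \<in> S0 \<Longrightarrow> x \<otimes>\<^bsub>grpB N\<^esub> y \<in> S0"
      unfolding S0_def by (auto simp flip: N.chi_mult)
    show "\<And>x. x \<in> S0 \<Longrightarrow> inv\<^bsub>grpB N\<^esub> x \<in> S0"
      unfolding S0_def by (auto simp flip: N.chi_inv)
    show "\<one>\<^bsub>grpB N\<^esub> \<in> S0" unfolding S0_def by (auto simp flip: N.chi_one)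
    show "\<And>x. x \<in> S0 \<Longrightarrow> g0 x \<in> carrier (grpB N')" unfolding S0_def by (auto simp: g0chi hc)
    show "\<And>x y. x \<in> S0 \<Longrightarrow> y \<in> S0 \<Longrightarrow> g0 (x \<otimes>\<^bsub>grpB N\<^esub> y) = g0 x \<otimes>\<^bsub>grpB N'\<^esub> g0 y"
      unfolding S0_def by (auto simp: g0chi hc hom_mult[OF hH] N'.chi_mult simp flip: N.chi_mult)
    show "\<And>x. x \<in> S0 \<Longrightarrow> g0 (inv\<^bsub>grpB N\<^esub> x) = inv\<^bsub>grpB N'\<^esub> g0 x"
      unfolding S0_def by (auto simp: g0chi hc hi N'.chi_inv simp flip: N.chi_inv)
    show "g0 \<one>\<^bsub>grpB N\<^esub> = \<one>\<^bsub>grpB N'\<^esub>"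
      using g0chi[of "\<one>\<^bsub>grpC N\<^esub>"] by (simp add: h1)
    show "\<And>b. b \<in> carrier (grpB N) \<Longrightarrow> b \<otimes>\<^bsub>grpB N\<^esub> b \<in> S0"
      unfolding S0_def by (metis N.chi_eta_psi N.eta_c N.psi_c image_eqI)
    show "\<And>s. s \<in> S0 \<Longrightarrow> psi N' (g0 s) = f (psi N s)"
      unfolding S0_def by (auto simp: g0chi hc N'.psi_chi N.psi_chi f1)
    show "\<And>x y x' y'. x \<in> carrier (grpB N) \<Longrightarrow> x' \<in> carrier (grpB N) \<Longrightarrow> y \<in> carrier (grpB N') \<Longrightarrow>
        y' \<in> carrier (grpB N') \<Longrightarrow> psi N' y = f (psi N x) \<Longrightarrow> psi N' y' = f (psi N x') \<Longrightarrow>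
        psi N' (y \<otimes>\<^bsub>grpB N'\<^esub> y') = f (psi N (x \<otimes>\<^bsub>grpB N\<^esub> x'))"
      by (simp add: N'.psi_mult N.psi_mult hom_mult[OF fH])
    fix b assume b: "b \<in> carrier (grpB N)"
    have pT: "psi N b \<in> two_torsion (grpA N)" using N.psi_tors[OF b] .
    have "f (psi N b) \<otimes>\<^bsub>grpA N'\<^esub> f (psi N b) = \<one>\<^bsub>grpA N'\<^esub>"
      using pT hom_mult[OF fH, of "psi N b" "psi N b"] f1 by (simp add: two_torsion_def)
    then have "f (psi N b) \<in> two_torsion (grpA N')" using fc b by (simp add: two_torsion_def)
    then obtain b' where b': "b' \<in> carrier (grpB N')" "psi N' b' = f (psi N b)" using N'.psi_onto by blast
    have "b' \<otimes>\<^bsub>grpB N'\<^esub> b' = chi N' (eta N' (f (psi N b)))" using N'.chi_eta_psi[OF b'(1)] b'(2) by simp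
    also have "\<dots> = chi N' (h (eta N (psi N b)))" using heta b by simp
    also have "\<dots> = g0 (chi N (eta N (psi N b)))" using g0chi b by simp
    also have "\<dots> = g0 (b \<otimes>\<^bsub>grpB N\<^esub> b)" using N.chi_eta_psi[OF b] by simp
    finally show "\<exists>b'. b' \<in> carrier (grpB N') \<and> psi N' b' = f (psi N b) \<and> b' \<otimes>\<^bsub>grpB N'\<^esub> b' = g0 (b \<otimes>\<^bsub>grpB N\<^esub> b)"
      using b' by blast
  qed
  then obtain g where gH: "g \<in> hom (grpB N) (grpB N')" and gS: "\<forall>s\<in>S0. g s = g0 s"
    and gP: "\<forall>b\<in>carrier (grpB N). psi N' (g b) = f (psi N b)" by blast
  let ?g = "restrict g (carrier (grpB N))"
  have "?g \<in> hom (grpB N) (grpB N')" using gH by (auto simp: hom_def)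
  moreover have "\<And>c. c \<in> carrier (grpC N) \<Longrightarrow> g (chi N c) = chi N' (h c)"
    using gS g0chi unfolding S0_def by simp
  ultimately have "(f, ?g, h) \<in> eeed_hom N N'"
    unfolding eeed_hom_def ghom_def using fH fE hH hE heta gP by auto
  then show ?thesis by blast
qed

locale bil =
  fixes V :: "'a monoid" and W :: "'w monoid" and q :: "'a \<Rightarrow> 'w"
  assumes cgV: "cg V" and cgW: "cg W" and qh: "q \<in> hom V W"
    and invV: "\<And>x. x \<in> carrier V \<Longrightarrow> x \<otimes>\<^bsub>V\<^esub> x = \<one>\<^bsub>V\<^esub>"
    and invW: "\<And>x. x \<in> carrier W \<Longrightarrow> x \<otimes>\<^bsub>W\<^esub> x = \<one>\<^bsub>W\<^esub>"
begin

sublocale V: cg V by (rule cgV)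
sublocale W: cg W by (rule cgW)

definition okUF :: "'a set \<Rightarrow> ('a \<Rightarrow> 'a \<Rightarrow> 'w) \<Rightarrow> bool" where
  "okUF U F \<longleftrightarrow> U \<subseteq> carrier V \<and> \<one>\<^bsub>V\<^esub> \<in> U \<and> (\<forall>u\<in>U. \<forall>u'\<in>U. u \<otimes>\<^bsub>V\<^esub> u' \<in> U) \<and>
     (\<forall>u\<in>U. \<forall>u'\<in>U. F u u' \<in> carrier W) \<and> (\<forall>u\<in>U. \<forall>u'\<in>U. F u u' = F u' u) \<and>
     (\<forall>u\<in>U. \<forall>u'\<in>U. \<forall>w\<in>U. F (u \<otimes>\<^bsub>V\<^esub> u') w = F u w \<otimes>\<^bsub>W\<^esub> F u' w) \<and> (\<forall>u\<in>U. F u u = q u)"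

lemma qc: "x \<in> carrier V \<Longrightarrow> q x \<in> carrier W" by (rule hom_in_carrier[OF qh])
lemma qm: "x \<in> carrier V \<Longrightarrow> y \<in> carrier V \<Longrightarrow> q (x \<otimes>\<^bsub>V\<^esub> y) = q x \<otimes>\<^bsub>W\<^esub> q y" by (rule hom_mult[OF qh])

lemma vcancel: "v \<in> carrier V \<Longrightarrow> x \<in> carrier V \<Longrightarrow> v \<otimes>\<^bsub>V\<^esub> (v \<otimes>\<^bsub>V\<^esub> x) = x"
  by (simp add: V.m_assoc[symmetric] invV)

lemma wcancel: "v \<in> carrier W \<Longrightarrow> x \<in> carrier W \<Longrightarrow> v \<otimes>\<^bsub>W\<^esub> (v \<otimes>\<^bsub>W\<^esub> x) = x"
  by (simp add: W.m_assoc[symmetric] invW)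

lemma L1: "v \<in> carrier V \<Longrightarrow> a \<in> carrier V \<Longrightarrow> b \<in> carrier V \<Longrightarrow>
    (v \<otimes>\<^bsub>V\<^esub> a) \<otimes>\<^bsub>V\<^esub> (v \<otimes>\<^bsub>V\<^esub> b) = a \<otimes>\<^bsub>V\<^esub> b"
  by (simp add: V.m_assoc V.m_lcomm[of a v] vcancel)
lemma L2: "v \<in> carrier V \<Longrightarrow> a \<in> carrier V \<Longrightarrow> b \<in> carrier V \<Longrightarrow>
    a \<otimes>\<^bsub>V\<^esub> (v \<otimes>\<^bsub>V\<^esub> b) = v \<otimes>\<^bsub>V\<^esub> (a \<otimes>\<^bsub>V\<^esub> b)"
  by (rule V.m_lcomm)
lemma L3: "v \<in> carrier V \<Longrightarrow> a \<in> carrier V \<Longrightarrow> b \<in> carrier V \<Longrightarrow>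
    (v \<otimes>\<^bsub>V\<^esub> a) \<otimes>\<^bsub>V\<^esub> b = v \<otimes>\<^bsub>V\<^esub> (a \<otimes>\<^bsub>V\<^esub> b)"
  by (rule V.m_assoc)

lemma WQ1: "a \<in> carrier W \<Longrightarrow> b \<in> carrier W \<Longrightarrow> Q \<in> carrier W \<Longrightarrow>
    (a \<otimes>\<^bsub>W\<^esub> Q) \<otimes>\<^bsub>W\<^esub> (b \<otimes>\<^bsub>W\<^esub> Q) = a \<otimes>\<^bsub>W\<^esub> b"
  by (simp add: W.m_assoc W.m_lcomm[of Q b] W.m_assoc[symmetric, of Q Q] invW)
lemma WQ2: "a \<in> carrier W \<Longrightarrow> b \<in> carrier W \<Longrightarrow> Q \<in> carrier W \<Longrightarrow>
    (a \<otimes>\<^bsub>W\<^esub> Q) \<otimes>\<^bsub>W\<^esub> b = (a \<otimes>\<^bsub>W\<^esub> b) \<otimes>\<^bsub>W\<^esub> Q"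
  by (simp add: W.m_assoc W.m_comm[of Q b])
lemma WQ3: "a \<in> carrier W \<Longrightarrow> b \<in> carrier W \<Longrightarrow> Q \<in> carrier W \<Longrightarrow>
    a \<otimes>\<^bsub>W\<^esub> (b \<otimes>\<^bsub>W\<^esub> Q) = (a \<otimes>\<^bsub>W\<^esub> b) \<otimes>\<^bsub>W\<^esub> Q"
  by (simp add: W.m_assoc)

lemma WQ4: "a \<in> carrier W \<Longrightarrow> Q \<in> carrier W \<Longrightarrow> (a \<otimes>\<^bsub>W\<^esub> Q) \<otimes>\<^bsub>W\<^esub> Q = a"
  by (simp add: W.m_assoc invW)

lemma extend_step:
  assumes ok: "okUF U F" and v: "v \<in> carrier V" and vU: "v \<notin> U"
  defines "r \<equiv> \<lambda>x. if x \<in> U then x else v \<otimes>\<^bsub>V\<^esub> x"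
  defines "U' \<equiv> U \<union> (\<lambda>x. v \<otimes>\<^bsub>V\<^esub> x) ` U"
  defines "F' \<equiv> \<lambda>x y. F (r x) (r y) \<otimes>\<^bsub>W\<^esub> (if x \<notin> U \<and> y \<notin> U then q v else \<one>\<^bsub>W\<^esub>)"
  shows "okUF U' F'" "\<And>u u'. u \<in> U \<Longrightarrow> u' \<in> U \<Longrightarrow> F' u u' = F u u'" "v \<in> U'"
proof -
  have UV: "U \<subseteq> carrier V" and U1: "\<one>\<^bsub>V\<^esub> \<in> U" and Um: "\<And>u u'. u \<in> U \<Longrightarrow> u' \<in> U \<Longrightarrow> u \<otimes>\<^bsub>V\<^esub> u' \<in> U"
    and FW: "\<And>u u'. u \<in> U \<Longrightarrow> u' \<in> U \<Longrightarrow> F u u' \<in> carrier W"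
    and Fs: "\<And>u u'. u \<in> U \<Longrightarrow> u' \<in> U \<Longrightarrow> F u u' = F u' u"
    and Fa: "\<And>u u' w. u \<in> U \<Longrightarrow> u' \<in> U \<Longrightarrow> w \<in> U \<Longrightarrow> F (u \<otimes>\<^bsub>V\<^esub> u') w = F u w \<otimes>\<^bsub>W\<^esub> F u' w"
    and Fd: "\<And>u. u \<in> U \<Longrightarrow> F u u = q u"
    using ok unfolding okUF_def by blast+
  have UVx: "\<And>x. x \<in> U \<Longrightarrow> x \<in> carrier V" using UV by blast
  have U'V: "\<And>x. x \<in> U' \<Longrightarrow> x \<in> carrier V" using UVx v unfolding U'_def by auto
  have rU: "\<And>x. x \<in> U' \<Longrightarrow> r x \<in> U"
    unfolding r_def U'_def using vcancel v UVx by auto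
  have rx: "\<And>x. x \<in> U' \<Longrightarrow> x \<notin> U \<Longrightarrow> x = v \<otimes>\<^bsub>V\<^esub> r x"
    unfolding r_def U'_def using vcancel v UVx by auto
  have rin: "\<And>x. x \<in> U \<Longrightarrow> r x = x" unfolding r_def by simp
  have memc: "\<And>x y. x \<in> U' \<Longrightarrow> y \<in> U' \<Longrightarrow> (x \<otimes>\<^bsub>V\<^esub> y \<in> U) = (x \<in> U \<longleftrightarrow> y \<in> U)"
  proof -
    fix x y assume x: "x \<in> U'" and y: "y \<in> U'"
    have xc: "x \<in> carrier V" and yc: "y \<in> carrier V" using U'V x y by auto
    have key: "\<And>a b. a \<in> U \<Longrightarrow> b \<in> U' \<Longrightarrow> b \<notin> U \<Longrightarrow> a \<otimes>\<^bsub>V\<^esub> b \<notin> U"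
    proof
      fix a b assume a: "a \<in> U" and b: "b \<in> U'" "b \<notin> U" and ab: "a \<otimes>\<^bsub>V\<^esub> b \<in> U"
      have "b = v \<otimes>\<^bsub>V\<^esub> r b" using rx b by blast
      then have "(a \<otimes>\<^bsub>V\<^esub> b) \<otimes>\<^bsub>V\<^esub> (a \<otimes>\<^bsub>V\<^esub> r b) = (a \<otimes>\<^bsub>V\<^esub> (v \<otimes>\<^bsub>V\<^esub> r b)) \<otimes>\<^bsub>V\<^esub> (a \<otimes>\<^bsub>V\<^esub> r b)"
        by simp
      also have "\<dots> = (v \<otimes>\<^bsub>V\<^esub> (a \<otimes>\<^bsub>V\<^esub> r b)) \<otimes>\<^bsub>V\<^esub> (a \<otimes>\<^bsub>V\<^esub> r b)"
        using UVx[OF a] UVx[OF rU[OF b(1)]] v by (simp add: L2)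
      also have "\<dots> = v \<otimes>\<^bsub>V\<^esub> ((a \<otimes>\<^bsub>V\<^esub> r b) \<otimes>\<^bsub>V\<^esub> (a \<otimes>\<^bsub>V\<^esub> r b))"
        using UVx[OF a] UVx[OF rU[OF b(1)]] v by (simp add: L3)
      also have "\<dots> = v" using UVx[OF a] UVx[OF rU[OF b(1)]] v by (simp add: invV)
      finally have "v = (a \<otimes>\<^bsub>V\<^esub> b) \<otimes>\<^bsub>V\<^esub> (a \<otimes>\<^bsub>V\<^esub> r b)" by simp
      then show False using Um[OF ab Um[OF a rU[OF b(1)]]] vU by simp
    qed
    show "(x \<otimes>\<^bsub>V\<^esub> y \<in> U) = (x \<in> U \<longleftrightarrow> y \<in> U)"
    proof (cases "x \<in> U")
      case True
      then show ?thesis using key[OF True y] Um[OF True] by blast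
    next
      case False
      show ?thesis
      proof (cases "y \<in> U")
        case True
        then show ?thesis using key[OF True x False] False xc yc V.m_comm[OF xc yc] by simp
      next
        case yF: False
        have "x \<otimes>\<^bsub>V\<^esub> y = r x \<otimes>\<^bsub>V\<^esub> r y"
        proof -
          have "x \<otimes>\<^bsub>V\<^esub> y = (v \<otimes>\<^bsub>V\<^esub> r x) \<otimes>\<^bsub>V\<^esub> (v \<otimes>\<^bsub>V\<^esub> r y)"
            using rx[OF x False] rx[OF y yF] by simp
          also have "\<dots> = r x \<otimes>\<^bsub>V\<^esub> r y"
            using v UVx[OF rU[OF x]] UVx[OF rU[OF y]] by (rule L1)
          finally show ?thesis .
        qed
        then show ?thesis using Um[OF rU[OF x] rU[OF y]] False yF by simp
      qed
    qed
  qed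
  have rmult: "\<And>x y. x \<in> U' \<Longrightarrow> y \<in> U' \<Longrightarrow> r (x \<otimes>\<^bsub>V\<^esub> y) = r x \<otimes>\<^bsub>V\<^esub> r y"
  proof -
    fix x y assume x: "x \<in> U'" and y: "y \<in> U'"
    have xc: "r x \<in> carrier V" and yc: "r y \<in> carrier V" using UVx rU x y by auto
    show "r (x \<otimes>\<^bsub>V\<^esub> y) = r x \<otimes>\<^bsub>V\<^esub> r y"
    proof (cases "x \<in> U")
      case xU: True
      show ?thesis
      proof (cases "y \<in> U")
        case True then show ?thesis using xU Um unfolding r_def by simp
      next
        case False
        have "x \<otimes>\<^bsub>V\<^esub> y \<notin> U" using memc[OF x y] xU False by simp
        obtain u where u: "y = v \<otimes>\<^bsub>V\<^esub> u" "r y = u" using rx[OF y False] by blast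
        have "r (x \<otimes>\<^bsub>V\<^esub> y) = v \<otimes>\<^bsub>V\<^esub> (x \<otimes>\<^bsub>V\<^esub> y)"
          unfolding r_def using \<open>x \<otimes>\<^bsub>V\<^esub> y \<notin> U\<close> by simp
        also have "\<dots> = v \<otimes>\<^bsub>V\<^esub> (x \<otimes>\<^bsub>V\<^esub> (v \<otimes>\<^bsub>V\<^esub> r y))" using u by simp
        also have "\<dots> = x \<otimes>\<^bsub>V\<^esub> r y" using v UVx[OF xU] yc by (simp add: L2 vcancel)
        finally show ?thesis using rin[OF xU] by simp
      qed
    next
      case xU: False
      show ?thesis
      proof (cases "y \<in> U")
        case True
        have "x \<otimes>\<^bsub>V\<^esub> y \<notin> U" using memc[OF x y] xU True by simp
        obtain u where u: "x = v \<otimes>\<^bsub>V\<^esub> u" "r x = u" using rx[OF x xU] by blast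
        have "r (x \<otimes>\<^bsub>V\<^esub> y) = v \<otimes>\<^bsub>V\<^esub> (x \<otimes>\<^bsub>V\<^esub> y)"
          unfolding r_def using \<open>x \<otimes>\<^bsub>V\<^esub> y \<notin> U\<close> by simp
        also have "\<dots> = v \<otimes>\<^bsub>V\<^esub> ((v \<otimes>\<^bsub>V\<^esub> r x) \<otimes>\<^bsub>V\<^esub> y)" using u by simp
        also have "\<dots> = r x \<otimes>\<^bsub>V\<^esub> y" using v UVx[OF True] xc by (simp add: L3 vcancel)
        finally show ?thesis using rin[OF True] by simp
      next
        case False
        have "x \<otimes>\<^bsub>V\<^esub> y \<in> U" using memc[OF x y] xU False by simp
        obtain u where u: "x = v \<otimes>\<^bsub>V\<^esub> u" "r x = u" using rx[OF x xU] by blast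
        obtain u' where u': "y = v \<otimes>\<^bsub>V\<^esub> u'" "r y = u'" using rx[OF y False] by blast
        have "r (x \<otimes>\<^bsub>V\<^esub> y) = x \<otimes>\<^bsub>V\<^esub> y" using rin \<open>x \<otimes>\<^bsub>V\<^esub> y \<in> U\<close> by simp
        also have "\<dots> = (v \<otimes>\<^bsub>V\<^esub> r x) \<otimes>\<^bsub>V\<^esub> (v \<otimes>\<^bsub>V\<^esub> r y)" using u u' by simp
        also have "\<dots> = r x \<otimes>\<^bsub>V\<^esub> r y" using v xc yc by (rule L1)
        finally show ?thesis .
      qed
    qed
  qed
  have inU': "\<And>z. z \<in> carrier V \<Longrightarrow> r z \<in> U \<Longrightarrow> z \<in> U'"
  proof -
    fix z assume z: "z \<in> carrier V" and rz: "r z \<in> U"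
    show "z \<in> U'"
    proof (cases "z \<in> U")
      case True then show ?thesis unfolding U'_def by blast
    next
      case False
      then have "z = v \<otimes>\<^bsub>V\<^esub> r z" unfolding r_def using v z by (simp add: vcancel)
      then show ?thesis using rz unfolding U'_def by blast
    qed
  qed
  have U'm: "\<And>x y. x \<in> U' \<Longrightarrow> y \<in> U' \<Longrightarrow> x \<otimes>\<^bsub>V\<^esub> y \<in> U'"
    using inU' rmult Um rU U'V by simp
  have Qc: "q v \<in> carrier W" using qc[OF v] .
  have F'c: "\<And>x y. x \<in> U' \<Longrightarrow> y \<in> U' \<Longrightarrow> F' x y \<in> carrier W"
    unfolding F'_def using FW rU Qc by simp
  show "okUF U' F'"
    unfolding okUF_def
  proof (intro conjI ballI)
    show "U' \<subseteq> carrier V" using U'V by blast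
    show "\<one>\<^bsub>V\<^esub> \<in> U'" unfolding U'_def using U1 by blast
    fix x y assume x: "x \<in> U'" and y: "y \<in> U'"
    show "x \<otimes>\<^bsub>V\<^esub> y \<in> U'" using U'm[OF x y] .
    show "F' x y \<in> carrier W" using F'c[OF x y] .
    show "F' x y = F' y x" unfolding F'_def using Fs[OF rU[OF x] rU[OF y]] by auto
    fix w assume w: "w \<in> U'"
    have a: "F (r x) (r w) \<in> carrier W" and b: "F (r y) (r w) \<in> carrier W" using FW rU x y w by auto
    have e: "F (r (x \<otimes>\<^bsub>V\<^esub> y)) (r w) = F (r x) (r w) \<otimes>\<^bsub>W\<^esub> F (r y) (r w)"
      using rmult[OF x y] Fa[OF rU[OF x] rU[OF y] rU[OF w]] by simp
    show "F' (x \<otimes>\<^bsub>V\<^esub> y) w = F' x w \<otimes>\<^bsub>W\<^esub> F' y w"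
      unfolding F'_def e using memc[OF x y] a b Qc
      by (cases "x \<in> U"; cases "y \<in> U"; cases "w \<in> U") (simp_all add: WQ1 WQ2 WQ3 WQ4)
  next
    fix x assume x: "x \<in> U'"
    show "F' x x = q x"
    proof (cases "x \<in> U")
      case True then show ?thesis unfolding F'_def using rin Fd qc UVx by simp
    next
      case False
      have "q x = q v \<otimes>\<^bsub>W\<^esub> q (r x)" using rx[OF x False] qm v UVx rU x by metis
      then show ?thesis unfolding F'_def using False Fd rU[OF x] qc UVx W.m_comm Qc by simp
    qed
  qed
  show "\<And>u u'. u \<in> U \<Longrightarrow> u' \<in> U \<Longrightarrow> F' u u' = F u u'"
    unfolding F'_def using rin FW by simp
  show "v \<in> U'" unfolding U'_def using U1 v by force
qed


definition graph :: "'a set \<Rightarrow> ('a \<Rightarrow> 'a \<Rightarrow> 'w) \<Rightarrow> (('a \<times> 'a) \<times> 'w) set" where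
  "graph U F = {((u, u'), F u u') | u u'. u \<in> U \<and> u' \<in> U}"

definition good :: "(('a \<times> 'a) \<times> 'w) set \<Rightarrow> bool" where
  "good R \<longleftrightarrow>
    (\<forall>u u' z. ((u, u'), z) \<in> R \<longrightarrow> u \<in> carrier V \<and> u' \<in> carrier V \<and> z \<in> carrier W) \<and>
    (\<forall>u u' z z'. ((u, u'), z) \<in> R \<longrightarrow> ((u, u'), z') \<in> R \<longrightarrow> z = z') \<and>
    (\<forall>u u' z. ((u, u'), z) \<in> R \<longrightarrow> (\<exists>y. ((u, u), y) \<in> R)) \<and>
    (\<forall>u u' x y. ((u, u), x) \<in> R \<longrightarrow> ((u', u'), y) \<in> R \<longrightarrow> (\<exists>z. ((u, u'), z) \<in> R)) \<and>
    (\<forall>u u' z. ((u, u'), z) \<in> R \<longrightarrow> ((u', u), z) \<in> R) \<and>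
    (\<forall>u u' w x y. ((u, w), x) \<in> R \<longrightarrow> ((u', w), y) \<in> R \<longrightarrow> ((u \<otimes>\<^bsub>V\<^esub> u', w), x \<otimes>\<^bsub>W\<^esub> y) \<in> R) \<and>
    (\<forall>u x. ((u, u), x) \<in> R \<longrightarrow> x = q u) \<and>
    ((\<one>\<^bsub>V\<^esub>, \<one>\<^bsub>V\<^esub>), \<one>\<^bsub>W\<^esub>) \<in> R"

lemma q1: "q \<one>\<^bsub>V\<^esub> = \<one>\<^bsub>W\<^esub>" by (rule hom_one'[OF qh V.is_group W.is_group])

lemma goodD:
  assumes "good R"
  shows "\<And>u u' z. ((u, u'), z) \<in> R \<Longrightarrow> u \<in> carrier V \<and> u' \<in> carrier V \<and> z \<in> carrier W"
    and "\<And>u u' z z'. ((u, u'), z) \<in> R \<Longrightarrow> ((u, u'), z') \<in> R \<Longrightarrow> z = z'"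
    and "\<And>u u' z. ((u, u'), z) \<in> R \<Longrightarrow> \<exists>y. ((u, u), y) \<in> R"
    and "\<And>u u' x y. ((u, u), x) \<in> R \<Longrightarrow> ((u', u'), y) \<in> R \<Longrightarrow> \<exists>z. ((u, u'), z) \<in> R"
    and "\<And>u u' z. ((u, u'), z) \<in> R \<Longrightarrow> ((u', u), z) \<in> R"
    and "\<And>u u' w x y. ((u, w), x) \<in> R \<Longrightarrow> ((u', w), y) \<in> R \<Longrightarrow> ((u \<otimes>\<^bsub>V\<^esub> u', w), x \<otimes>\<^bsub>W\<^esub> y) \<in> R"
    and "\<And>u x. ((u, u), x) \<in> R \<Longrightarrow> x = q u"
    and "((\<one>\<^bsub>V\<^esub>, \<one>\<^bsub>V\<^esub>), \<one>\<^bsub>W\<^esub>) \<in> R"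
proof -
  note c = assms[unfolded good_def]
  note c1 = c[THEN conjunct1] and c2 = c[THEN conjunct2, THEN conjunct1]
    and c3 = c[THEN conjunct2, THEN conjunct2, THEN conjunct1]
    and c4 = c[THEN conjunct2, THEN conjunct2, THEN conjunct2, THEN conjunct1]
    and c5 = c[THEN conjunct2, THEN conjunct2, THEN conjunct2, THEN conjunct2, THEN conjunct1]
    and c6 = c[THEN conjunct2, THEN conjunct2, THEN conjunct2, THEN conjunct2, THEN conjunct2, THEN conjunct1]
    and c7 = c[THEN conjunct2, THEN conjunct2, THEN conjunct2, THEN conjunct2, THEN conjunct2, THEN conjunct2, THEN conjunct1]
    and c8 = c[THEN conjunct2, THEN conjunct2, THEN conjunct2, THEN conjunct2, THEN conjunct2, THEN conjunct2, THEN conjunct2]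
  show "\<And>u u' z. ((u, u'), z) \<in> R \<Longrightarrow> u \<in> carrier V \<and> u' \<in> carrier V \<and> z \<in> carrier W"
    by (rule c1[rule_format])
  show "\<And>u u' z z'. ((u, u'), z) \<in> R \<Longrightarrow> ((u, u'), z') \<in> R \<Longrightarrow> z = z'"
    by (rule c2[rule_format])
  show "\<And>u u' z. ((u, u'), z) \<in> R \<Longrightarrow> \<exists>y. ((u, u), y) \<in> R"
    by (rule c3[rule_format])
  show "\<And>u u' x y. ((u, u), x) \<in> R \<Longrightarrow> ((u', u'), y) \<in> R \<Longrightarrow> \<exists>z. ((u, u'), z) \<in> R"
    by (rule c4[rule_format])
  show "\<And>u u' z. ((u, u'), z) \<in> R \<Longrightarrow> ((u', u), z) \<in> R"
    by (rule c5[rule_format])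
  show "\<And>u u' w x y. ((u, w), x) \<in> R \<Longrightarrow> ((u', w), y) \<in> R \<Longrightarrow> ((u \<otimes>\<^bsub>V\<^esub> u', w), x \<otimes>\<^bsub>W\<^esub> y) \<in> R"
    by (rule c6[rule_format])
  show "\<And>u x. ((u, u), x) \<in> R \<Longrightarrow> x = q u"
    by (rule c7[rule_format])
  show "((\<one>\<^bsub>V\<^esub>, \<one>\<^bsub>V\<^esub>), \<one>\<^bsub>W\<^esub>) \<in> R" by (rule c8)
qed

lemma goodI:
  assumes "\<And>u u' z. ((u, u'), z) \<in> R \<Longrightarrow> u \<in> carrier V \<and> u' \<in> carrier V \<and> z \<in> carrier W"
    and "\<And>u u' z z'. ((u, u'), z) \<in> R \<Longrightarrow> ((u, u'), z') \<in> R \<Longrightarrow> z = z'"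
    and "\<And>u u' z. ((u, u'), z) \<in> R \<Longrightarrow> \<exists>y. ((u, u), y) \<in> R"
    and "\<And>u u' x y. ((u, u), x) \<in> R \<Longrightarrow> ((u', u'), y) \<in> R \<Longrightarrow> \<exists>z. ((u, u'), z) \<in> R"
    and "\<And>u u' z. ((u, u'), z) \<in> R \<Longrightarrow> ((u', u), z) \<in> R"
    and "\<And>u u' w x y. ((u, w), x) \<in> R \<Longrightarrow> ((u', w), y) \<in> R \<Longrightarrow> ((u \<otimes>\<^bsub>V\<^esub> u', w), x \<otimes>\<^bsub>W\<^esub> y) \<in> R"
    and "\<And>u x. ((u, u), x) \<in> R \<Longrightarrow> x = q u"
    and "((\<one>\<^bsub>V\<^esub>, \<one>\<^bsub>V\<^esub>), \<one>\<^bsub>W\<^esub>) \<in> R"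
  shows "good R"
  unfolding good_def
  apply (intro conjI)
  subgoal using assms(1) by blast
  subgoal using assms(2) by blast
  subgoal using assms(3) by blast
  subgoal using assms(4) by blast
  subgoal using assms(5) by blast
  subgoal using assms(6) by blast
  subgoal using assms(7) by blast
  subgoal using assms(8) by blast
  done

lemma good_graph:
  assumes ok: "okUF U F" shows "good (graph U F)"
proof -
  have UV: "U \<subseteq> carrier V" and U1: "\<one>\<^bsub>V\<^esub> \<in> U" and Um: "\<And>u u'. u \<in> U \<Longrightarrow> u' \<in> U \<Longrightarrow> u \<otimes>\<^bsub>V\<^esub> u' \<in> U"
    and FW: "\<And>u u'. u \<in> U \<Longrightarrow> u' \<in> U \<Longrightarrow> F u u' \<in> carrier W"
    and Fs: "\<And>u u'. u \<in> U \<Longrightarrow> u' \<in> U \<Longrightarrow> F u u' = F u' u"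
    and Fa: "\<And>u u' w. u \<in> U \<Longrightarrow> u' \<in> U \<Longrightarrow> w \<in> U \<Longrightarrow> F (u \<otimes>\<^bsub>V\<^esub> u') w = F u w \<otimes>\<^bsub>W\<^esub> F u' w"
    and Fd: "\<And>u. u \<in> U \<Longrightarrow> F u u = q u"
    using ok unfolding okUF_def by blast+
  have mem: "\<And>u u' z. ((u, u'), z) \<in> graph U F \<longleftrightarrow> u \<in> U \<and> u' \<in> U \<and> z = F u u'"
    unfolding graph_def by blast
  show ?thesis
  proof (rule goodI)
    fix u u' z assume a: "((u, u'), z) \<in> graph U F"
    then show "u \<in> carrier V \<and> u' \<in> carrier V \<and> z \<in> carrier W" using UV FW unfolding mem by auto
    show "\<exists>y. ((u, u), y) \<in> graph U F" using a unfolding mem by blast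
    show "((u', u), z) \<in> graph U F" using a Fs unfolding mem by auto
  next
    fix u u' z z' assume "((u, u'), z) \<in> graph U F" "((u, u'), z') \<in> graph U F"
    then show "z = z'" unfolding mem by simp
  next
    fix u u' x y assume "((u, u), x) \<in> graph U F" "((u', u'), y) \<in> graph U F"
    then show "\<exists>z. ((u, u'), z) \<in> graph U F" unfolding mem by blast
  next
    fix u u' w x y assume "((u, w), x) \<in> graph U F" "((u', w), y) \<in> graph U F"
    then show "((u \<otimes>\<^bsub>V\<^esub> u', w), x \<otimes>\<^bsub>W\<^esub> y) \<in> graph U F" unfolding mem using Um Fa by auto
  next
    fix u x assume "((u, u), x) \<in> graph U F" then show "x = q u" unfolding mem using Fd by auto
  next
    show "((\<one>\<^bsub>V\<^esub>, \<one>\<^bsub>V\<^esub>), \<one>\<^bsub>W\<^esub>) \<in> graph U F" unfolding mem using U1 Fd q1 by auto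
  qed
qed

definition Uof :: "(('a \<times> 'a) \<times> 'w) set \<Rightarrow> 'a set" where
  "Uof R = {u. \<exists>z. ((u, u), z) \<in> R}"
definition Fof :: "(('a \<times> 'a) \<times> 'w) set \<Rightarrow> 'a \<Rightarrow> 'a \<Rightarrow> 'w" where
  "Fof R u u' = (THE z. ((u, u'), z) \<in> R)"

lemma good_fun:
  assumes g: "good M"
  shows "okUF (Uof M) (Fof M)" "M = graph (Uof M) (Fof M)"
proof -
  have g1: "\<And>u u' z. ((u, u'), z) \<in> M \<Longrightarrow> u \<in> carrier V \<and> u' \<in> carrier V \<and> z \<in> carrier W" by (rule goodD(1)[OF g])
  have g2: "\<And>u u' z z'. ((u, u'), z) \<in> M \<Longrightarrow> ((u, u'), z') \<in> M \<Longrightarrow> z = z'" by (rule goodD(2)[OF g])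
  have g3: "\<And>u u' z. ((u, u'), z) \<in> M \<Longrightarrow> \<exists>y. ((u, u), y) \<in> M" by (rule goodD(3)[OF g])
  have g4: "\<And>u u' x y. ((u, u), x) \<in> M \<Longrightarrow> ((u', u'), y) \<in> M \<Longrightarrow> \<exists>z. ((u, u'), z) \<in> M" by (rule goodD(4)[OF g])
  have g5: "\<And>u u' z. ((u, u'), z) \<in> M \<Longrightarrow> ((u', u), z) \<in> M" by (rule goodD(5)[OF g])
  have g6: "\<And>u u' w x y. ((u, w), x) \<in> M \<Longrightarrow> ((u', w), y) \<in> M \<Longrightarrow> ((u \<otimes>\<^bsub>V\<^esub> u', w), x \<otimes>\<^bsub>W\<^esub> y) \<in> M" by (rule goodD(6)[OF g])
  have g7: "\<And>u x. ((u, u), x) \<in> M \<Longrightarrow> x = q u" by (rule goodD(7)[OF g])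
  have g8: "((\<one>\<^bsub>V\<^esub>, \<one>\<^bsub>V\<^esub>), \<one>\<^bsub>W\<^esub>) \<in> M" by (rule goodD(8)[OF g])
  have Fu: "\<And>u u' z. ((u, u'), z) \<in> M \<Longrightarrow> Fof M u u' = z"
    unfolding Fof_def using g2 by blast
  have pair: "\<And>u u'. u \<in> Uof M \<Longrightarrow> u' \<in> Uof M \<Longrightarrow> ((u, u'), Fof M u u') \<in> M"
  proof -
    fix u u' assume "u \<in> Uof M" "u' \<in> Uof M"
    then obtain z where "((u, u'), z) \<in> M" using g4 unfolding Uof_def by blast
    then show "((u, u'), Fof M u u') \<in> M" using Fu by simp
  qed
  have inU: "\<And>u u' z. ((u, u'), z) \<in> M \<Longrightarrow> u \<in> Uof M \<and> u' \<in> Uof M"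
    unfolding Uof_def using g3 g5 by blast
  show "okUF (Uof M) (Fof M)"
    unfolding okUF_def
  proof (intro conjI ballI)
    show "Uof M \<subseteq> carrier V" unfolding Uof_def using g1 by blast
    show "\<one>\<^bsub>V\<^esub> \<in> Uof M" unfolding Uof_def using g8 by blast
    fix u u' assume u: "u \<in> Uof M" and u': "u' \<in> Uof M"
    show "u \<otimes>\<^bsub>V\<^esub> u' \<in> Uof M" using g6[OF pair[OF u u] pair[OF u' u]] inU by blast
    show "Fof M u u' \<in> carrier W" using g1[OF pair[OF u u']] by blast
    show "Fof M u u' = Fof M u' u" using Fu[OF g5[OF pair[OF u u']]] by simp
    fix w assume w: "w \<in> Uof M"
    show "Fof M (u \<otimes>\<^bsub>V\<^esub> u') w = Fof M u w \<otimes>\<^bsub>W\<^esub> Fof M u' w"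
      using Fu[OF g6[OF pair[OF u w] pair[OF u' w]]] .
  next
    fix u assume u: "u \<in> Uof M"
    show "Fof M u u = q u" using g7[OF pair[OF u u]] .
  qed
  show "M = graph (Uof M) (Fof M)"
  proof
    show "M \<subseteq> graph (Uof M) (Fof M)"
    proof
      fix p assume p: "p \<in> M"
      obtain u u' z where pe: "p = ((u, u'), z)" by (cases p) auto
      then show "p \<in> graph (Uof M) (Fof M)" using p inU Fu unfolding graph_def by fastforce
    qed
    show "graph (Uof M) (Fof M) \<subseteq> M" unfolding graph_def using pair by blast
  qed
qed

lemma bil_exists: "\<exists>F. okUF (carrier V) F"
proof -
  have "\<exists>M\<in>{R. good R}. \<forall>X\<in>{R. good R}. M \<subseteq> X \<longrightarrow> X = M"
  proof (rule Zorn_Lemma2, intro ballI)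
    fix C assume C: "C \<in> chains {R. good R}"
    show "\<exists>U\<in>{R. good R}. \<forall>X\<in>C. X \<subseteq> U"
    proof (cases "C = {}")
      case True
      have "okUF {\<one>\<^bsub>V\<^esub>} (\<lambda>_ _. \<one>\<^bsub>W\<^esub>)" unfolding okUF_def using q1 by auto
      then have "good (graph {\<one>\<^bsub>V\<^esub>} (\<lambda>_ _. \<one>\<^bsub>W\<^esub>))" by (rule good_graph)
      then show ?thesis using True by blast
    next
      case False
      have Cg: "\<And>R. R \<in> C \<Longrightarrow> good R" using C by (auto simp: chains_def)
      have ch: "\<And>R1 R2. R1 \<in> C \<Longrightarrow> R2 \<in> C \<Longrightarrow> R1 \<subseteq> R2 \<or> R2 \<subseteq> R1"
        using C by (auto simp: chains_def chain_subset_def)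
      have two: "\<And>p1 p2. p1 \<in> \<Union>C \<Longrightarrow> p2 \<in> \<Union>C \<Longrightarrow> \<exists>R\<in>C. p1 \<in> R \<and> p2 \<in> R"
      proof -
        fix p1 p2 assume "p1 \<in> \<Union>C" "p2 \<in> \<Union>C"
        then obtain R1 R2 where "R1 \<in> C" "R2 \<in> C" "p1 \<in> R1" "p2 \<in> R2" by blast
        then show "\<exists>R\<in>C. p1 \<in> R \<and> p2 \<in> R" using ch[of R1 R2] by blast
      qed
      have one: "\<And>p. p \<in> \<Union>C \<Longrightarrow> \<exists>R\<in>C. p \<in> R" by blast
      have "good (\<Union>C)"
        unfolding good_def
      proof (intro conjI allI impI)
        fix u u' z assume "((u, u'), z) \<in> \<Union>C"
        then obtain R where R: "R \<in> C" "((u, u'), z) \<in> R" by blast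
        have "good R" using Cg[OF R(1)] .
        then have "u \<in> carrier V \<and> u' \<in> carrier V \<and> z \<in> carrier W" using R(2) by (rule goodD(1))
        then show "u \<in> carrier V" "u' \<in> carrier V" "z \<in> carrier W" by auto
      next
        fix u u' z z' assume "((u, u'), z) \<in> \<Union>C" "((u, u'), z') \<in> \<Union>C"
        then obtain R where R: "R \<in> C" "((u, u'), z) \<in> R" "((u, u'), z') \<in> R" using two by blast
        have "good R" using Cg[OF R(1)] .
        then show "z = z'" using R(2,3) by (rule goodD(2))
      next
        fix u u' z assume "((u, u'), z) \<in> \<Union>C"
        then obtain R where R: "R \<in> C" "((u, u'), z) \<in> R" by blast
        have "good R" using Cg[OF R(1)] .
        then obtain y where "((u, u), y) \<in> R" using R(2) goodD(3) by blast
        then show "\<exists>y. ((u, u), y) \<in> \<Union>C" using R(1) by blast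
      next
        fix u u' x y assume "((u, u), x) \<in> \<Union>C" "((u', u'), y) \<in> \<Union>C"
        then obtain R where R: "R \<in> C" "((u, u), x) \<in> R" "((u', u'), y) \<in> R" using two by blast
        have "good R" using Cg[OF R(1)] .
        then obtain z where "((u, u'), z) \<in> R" using R(2,3) goodD(4) by blast
        then show "\<exists>z. ((u, u'), z) \<in> \<Union>C" using R(1) by blast
      next
        fix u u' z assume "((u, u'), z) \<in> \<Union>C"
        then obtain R where R: "R \<in> C" "((u, u'), z) \<in> R" by blast
        have "good R" using Cg[OF R(1)] .
        then have "((u', u), z) \<in> R" using R(2) by (rule goodD(5))
        then show "((u', u), z) \<in> \<Union>C" using R(1) by blast
      next
        fix u u' w x y assume "((u, w), x) \<in> \<Union>C" "((u', w), y) \<in> \<Union>C"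
        then obtain R where R: "R \<in> C" "((u, w), x) \<in> R" "((u', w), y) \<in> R" using two by blast
        have "good R" using Cg[OF R(1)] .
        then have "((u \<otimes>\<^bsub>V\<^esub> u', w), x \<otimes>\<^bsub>W\<^esub> y) \<in> R" using R(2,3) by (rule goodD(6))
        then show "((u \<otimes>\<^bsub>V\<^esub> u', w), x \<otimes>\<^bsub>W\<^esub> y) \<in> \<Union>C" using R(1) by blast
      next
        fix u x assume "((u, u), x) \<in> \<Union>C"
        then obtain R where R: "R \<in> C" "((u, u), x) \<in> R" by blast
        have "good R" using Cg[OF R(1)] .
        then show "x = q u" using R(2) by (rule goodD(7))
      next
        obtain R where R: "R \<in> C" using False by blast
        have "good R" using Cg[OF R] .
        then show "((\<one>\<^bsub>V\<^esub>, \<one>\<^bsub>V\<^esub>), \<one>\<^bsub>W\<^esub>) \<in> \<Union>C" using R goodD(8) by blast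
      qed
      then show ?thesis by blast
    qed
  qed
  then obtain M where gM: "good M" and maxM: "\<And>X. good X \<Longrightarrow> M \<subseteq> X \<Longrightarrow> X = M" by auto
  note ok = good_fun(1)[OF gM] and Meq = good_fun(2)[OF gM]
  have "Uof M = carrier V"
  proof (rule ccontr)
    assume ne: "Uof M \<noteq> carrier V"
    have "Uof M \<subseteq> carrier V" using ok unfolding okUF_def by blast
    then obtain v where v: "v \<in> carrier V" "v \<notin> Uof M" using ne by blast
    define r where "r = (\<lambda>x. if x \<in> Uof M then x else v \<otimes>\<^bsub>V\<^esub> x)"
    define U' where "U' = Uof M \<union> (\<lambda>x. v \<otimes>\<^bsub>V\<^esub> x) ` Uof M"
    define F' where "F' = (\<lambda>x y. Fof M (r x) (r y) \<otimes>\<^bsub>W\<^esub> (if x \<notin> Uof M \<and> y \<notin> Uof M then q v else \<one>\<^bsub>W\<^esub>))"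
    have st: "okUF U' F'" "\<And>u u'. u \<in> Uof M \<Longrightarrow> u' \<in> Uof M \<Longrightarrow> F' u u' = Fof M u u'" "v \<in> U'"
      using extend_step[OF ok v] unfolding r_def U'_def F'_def by auto
    have "M \<subseteq> graph U' F'"
    proof
      fix p assume "p \<in> M"
      then have "p \<in> graph (Uof M) (Fof M)" using Meq by simp
      then obtain u u' where "p = ((u, u'), Fof M u u')" "u \<in> Uof M" "u' \<in> Uof M" unfolding graph_def by blast
      then show "p \<in> graph U' F'" using st(2) unfolding graph_def U'_def by force
    qed
    then have "graph U' F' = M" using maxM good_graph[OF st(1)] by blast
    moreover have "((v, v), F' v v) \<in> graph U' F'" using st(3) unfolding graph_def by blast
    ultimately have "v \<in> Uof M" unfolding Uof_def by blast
    then show False using v by blast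
  qed
  then show ?thesis using ok by metis
qed

end

definition trB :: "'b monoid \<Rightarrow> ('b \<Rightarrow> 'd) \<Rightarrow> 'd monoid" where
  "trB G j = \<lparr>carrier = j ` carrier G,
     mult = (\<lambda>x y. j (inv_into (carrier G) j x \<otimes>\<^bsub>G\<^esub> inv_into (carrier G) j y)),
     one = j \<one>\<^bsub>G\<^esub>\<rparr>"

definition tr :: "('a, 'b, 'c) eeed \<Rightarrow> ('b \<Rightarrow> 'd) \<Rightarrow> ('a, 'd, 'c) eeed" where
  "tr N j = \<lparr>grpA = grpA N, grpB = trB (grpB N) j, grpC = grpC N, eta = eta N,
     chi = (\<lambda>c. j (chi N c)), psi = (\<lambda>b. psi N (inv_into (carrier (grpB N)) j b))\<rparr>"

lemma tr_simps[simp]: "grpA (tr N j) = grpA N" "grpB (tr N j) = trB (grpB N) j" "grpC (tr N j) = grpC N"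
  "eta (tr N j) = eta N" "chi (tr N j) = (\<lambda>c. j (chi N c))"
  "psi (tr N j) = (\<lambda>b. psi N (inv_into (carrier (grpB N)) j b))"
  by (simp_all add: tr_def)

lemma trB_simps[simp]: "carrier (trB G j) = j ` carrier G"
  "mult (trB G j) = (\<lambda>x y. j (inv_into (carrier G) j x \<otimes>\<^bsub>G\<^esub> inv_into (carrier G) j y))"
  "one (trB G j) = j \<one>\<^bsub>G\<^esub>"
  by (simp_all add: trB_def)

lemma trB_comm_group:
  assumes G: "comm_group G" and inj: "inj_on j (carrier G)"
  shows "comm_group (trB G j)"
proof -
  interpret G: comm_group G by fact
  let ?k = "inv_into (carrier G) j"
  have kj: "\<And>x. x \<in> carrier G \<Longrightarrow> ?k (j x) = x" using inj by (simp add: inv_into_f_f)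
  have kc: "\<And>y. y \<in> j ` carrier G \<Longrightarrow> ?k y \<in> carrier G" by (simp add: inv_into_into)
  have jk: "\<And>y. y \<in> j ` carrier G \<Longrightarrow> j (?k y) = y" by (simp add: f_inv_into_f)
  have gr: "group (trB G j)"
  proof (rule groupI)
    fix x y assume "x \<in> carrier (trB G j)" "y \<in> carrier (trB G j)"
    then show "x \<otimes>\<^bsub>trB G j\<^esub> y \<in> carrier (trB G j)" using kc by simp
  next
    show "\<one>\<^bsub>trB G j\<^esub> \<in> carrier (trB G j)" by simp
  next
    fix x y z assume x: "x \<in> carrier (trB G j)" and y: "y \<in> carrier (trB G j)" and z: "z \<in> carrier (trB G j)"
    then show "x \<otimes>\<^bsub>trB G j\<^esub> y \<otimes>\<^bsub>trB G j\<^esub> z = x \<otimes>\<^bsub>trB G j\<^esub> (y \<otimes>\<^bsub>trB G j\<^esub> z)"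
      using kc kj by (simp add: G.m_assoc)
  next
    fix x assume x: "x \<in> carrier (trB G j)"
    then show "\<one>\<^bsub>trB G j\<^esub> \<otimes>\<^bsub>trB G j\<^esub> x = x" using kc kj jk by simp
  next
    fix x assume x: "x \<in> carrier (trB G j)"
    have "j (inv\<^bsub>G\<^esub> ?k x) \<in> carrier (trB G j)" using x kc by simp
    moreover have "j (inv\<^bsub>G\<^esub> ?k x) \<otimes>\<^bsub>trB G j\<^esub> x = \<one>\<^bsub>trB G j\<^esub>" using x kc kj by simp
    ultimately show "\<exists>y\<in>carrier (trB G j). y \<otimes>\<^bsub>trB G j\<^esub> x = \<one>\<^bsub>trB G j\<^esub>" by blast
  qed
  show ?thesis
  proof (rule group.group_comm_groupI[OF gr])
    fix x y assume "x \<in> carrier (trB G j)" "y \<in> carrier (trB G j)"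
    then show "x \<otimes>\<^bsub>trB G j\<^esub> y = y \<otimes>\<^bsub>trB G j\<^esub> x" using kc by (simp add: G.m_comm)
  qed
qed

lemma eeed_transport:
  assumes N: "is_eeed N" and inj: "inj_on j (carrier (grpB N))"
  shows "is_eeed (tr N j)"
proof -
  interpret N: eL N using N by (simp add: eL_def)
  let ?k = "inv_into (carrier (grpB N)) j"
  have kj: "\<And>x. x \<in> carrier (grpB N) \<Longrightarrow> ?k (j x) = x" using inj by (simp add: inv_into_f_f)
  have kc: "\<And>y. y \<in> j ` carrier (grpB N) \<Longrightarrow> ?k y \<in> carrier (grpB N)" by (simp add: inv_into_into)
  have jk: "\<And>y. y \<in> j ` carrier (grpB N) \<Longrightarrow> j (?k y) = y" by (simp add: f_inv_into_f)
  have cgT: "comm_group (trB (grpB N) j)" by (rule trB_comm_group[OF N.B.comm_group_axioms inj])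
  have chiH: "(\<lambda>c. j (chi N c)) \<in> hom (grpC N) (trB (grpB N) j)"
    by (rule homI) (simp_all add: kj N.chi_mult)
  have psiH: "(\<lambda>b. psi N (?k b)) \<in> hom (trB (grpB N) j) (grpA N)"
    by (rule homI) (auto simp: kj kc N.psi_mult)
  have ed: "is_eed (tr N j)"
    unfolding is_eed_def
    using N.A.comm_group_axioms N.C.comm_group_axioms cgT N.eta_hom chiH psiH N.eta_sq
    by (auto simp: kj kc N.psi_chi N.chi_eta_psi)
  have ex: "eed_exact (tr N j)"
    unfolding eed_exact_def
  proof (intro conjI ballI impI)
    fix a assume a: "a \<in> two_torsion (grpA (tr N j))"
    then obtain b where b: "b \<in> carrier (grpB N)" "psi N b = a" using N.psi_onto by auto
    then show "\<exists>b\<in>carrier (grpB (tr N j)). psi (tr N j) b = a"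
      by (intro bexI[of _ "j b"]) (simp_all add: kj)
  next
    fix b assume b: "b \<in> carrier (grpB (tr N j))" and p: "psi (tr N j) b = \<one>\<^bsub>grpA (tr N j)\<^esub>"
    then obtain c where c: "c \<in> carrier (grpC N)" "chi N c = ?k b" using N.ker_psi[of "?k b"] kc by auto
    then show "\<exists>c\<in>carrier (grpC (tr N j)). chi (tr N j) c = b" using b jk by (intro bexI[of _ c]) auto
  next
    fix c assume c: "c \<in> carrier (grpC (tr N j))" and e: "chi (tr N j) c = \<one>\<^bsub>grpB (tr N j)\<^esub>"
    then have "j (chi N c) = j \<one>\<^bsub>grpB N\<^esub>" by simp
    then have "chi N c = \<one>\<^bsub>grpB N\<^esub>" using inj c by (auto dest: inj_onD)
    then show "c \<in> twice (grpC (tr N j))" using N.ker_chi c by simp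
  qed
  show ?thesis using ed ex by (simp add: is_eeed_def)
qed

lemma pi_tr: "pi_obj (tr N j) = pi_obj N" by (simp add: pi_obj_def)

context bil begin

definition Bgrp :: "('a \<Rightarrow> 'a \<Rightarrow> 'w) \<Rightarrow> ('a \<times> 'w) monoid" where
  "Bgrp F = \<lparr>carrier = carrier V \<times> carrier W,
     mult = (\<lambda>x y. (fst x \<otimes>\<^bsub>V\<^esub> fst y, snd x \<otimes>\<^bsub>W\<^esub> snd y \<otimes>\<^bsub>W\<^esub> F (fst x) (fst y))),
     one = (\<one>\<^bsub>V\<^esub>, \<one>\<^bsub>W\<^esub>)\<rparr>"

lemma Bgrp_simps[simp]: "carrier (Bgrp F) = carrier V \<times> carrier W"
  "mult (Bgrp F) = (\<lambda>x y. (fst x \<otimes>\<^bsub>V\<^esub> fst y, snd x \<otimes>\<^bsub>W\<^esub> snd y \<otimes>\<^bsub>W\<^esub> F (fst x) (fst y)))"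
  "one (Bgrp F) = (\<one>\<^bsub>V\<^esub>, \<one>\<^bsub>W\<^esub>)"
  by (simp_all add: Bgrp_def)

lemma F_one:
  assumes ok: "okUF (carrier V) F" and v: "v \<in> carrier V"
  shows "F \<one>\<^bsub>V\<^esub> v = \<one>\<^bsub>W\<^esub>"
proof -
  have FW: "F \<one>\<^bsub>V\<^esub> v \<in> carrier W" using ok v unfolding okUF_def by blast
  have "F \<one>\<^bsub>V\<^esub> v = F (\<one>\<^bsub>V\<^esub> \<otimes>\<^bsub>V\<^esub> \<one>\<^bsub>V\<^esub>) v" by simp
  also have "\<dots> = F \<one>\<^bsub>V\<^esub> v \<otimes>\<^bsub>W\<^esub> F \<one>\<^bsub>V\<^esub> v" using ok v unfolding okUF_def by blast
  also have "\<dots> = \<one>\<^bsub>W\<^esub>" using invW[OF FW] .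
  finally show ?thesis .
qed

lemma Bgrp_comm_group:
  assumes ok: "okUF (carrier V) F"
  shows "comm_group (Bgrp F)"
proof -
  have FW: "\<And>u u'. u \<in> carrier V \<Longrightarrow> u' \<in> carrier V \<Longrightarrow> F u u' \<in> carrier W"
    and Fs: "\<And>u u'. u \<in> carrier V \<Longrightarrow> u' \<in> carrier V \<Longrightarrow> F u u' = F u' u"
    and Fa: "\<And>u u' w. u \<in> carrier V \<Longrightarrow> u' \<in> carrier V \<Longrightarrow> w \<in> carrier V \<Longrightarrow> F (u \<otimes>\<^bsub>V\<^esub> u') w = F u w \<otimes>\<^bsub>W\<^esub> F u' w"
    using ok unfolding okUF_def by blast+
  have Fa2: "\<And>u u' w. u \<in> carrier V \<Longrightarrow> u' \<in> carrier V \<Longrightarrow> w \<in> carrier V \<Longrightarrow> F w (u \<otimes>\<^bsub>V\<^esub> u') = F w u \<otimes>\<^bsub>W\<^esub> F w u'"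
    using Fa Fs by (metis V.m_closed)
  have gr: "group (Bgrp F)"
  proof (rule groupI)
    fix x y assume "x \<in> carrier (Bgrp F)" "y \<in> carrier (Bgrp F)"
    then show "x \<otimes>\<^bsub>Bgrp F\<^esub> y \<in> carrier (Bgrp F)" using FW by (auto simp: mem_Times_iff)
  next
    show "\<one>\<^bsub>Bgrp F\<^esub> \<in> carrier (Bgrp F)" by simp
  next
    fix x y z assume x: "x \<in> carrier (Bgrp F)" and y: "y \<in> carrier (Bgrp F)" and z: "z \<in> carrier (Bgrp F)"
    obtain a X where xa: "x = (a, X)" by (cases x)
    obtain b Y where yb: "y = (b, Y)" by (cases y)
    obtain c Z where zc: "z = (c, Z)" by (cases z)
    have a: "a \<in> carrier V" "X \<in> carrier W" using x xa by auto
    have b: "b \<in> carrier V" "Y \<in> carrier W" using y yb by auto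
    have c: "c \<in> carrier V" "Z \<in> carrier W" using z zc by auto
    have "F (a \<otimes>\<^bsub>V\<^esub> b) c = F a c \<otimes>\<^bsub>W\<^esub> F b c" using Fa a b c by simp
    moreover have "F a (b \<otimes>\<^bsub>V\<^esub> c) = F a b \<otimes>\<^bsub>W\<^esub> F a c" using Fa2 a b c by simp
    ultimately show "x \<otimes>\<^bsub>Bgrp F\<^esub> y \<otimes>\<^bsub>Bgrp F\<^esub> z = x \<otimes>\<^bsub>Bgrp F\<^esub> (y \<otimes>\<^bsub>Bgrp F\<^esub> z)"
      using a b c FW by (simp add: xa yb zc V.m_assoc W.m_ac)
  next
    fix x assume x: "x \<in> carrier (Bgrp F)"
    obtain a X where xa: "x = (a, X)" by (cases x)
    have a: "a \<in> carrier V" "X \<in> carrier W" using x xa by auto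
    show "\<one>\<^bsub>Bgrp F\<^esub> \<otimes>\<^bsub>Bgrp F\<^esub> x = x" using a F_one[OF ok a(1)] by (simp add: xa)
  next
    fix x assume x: "x \<in> carrier (Bgrp F)"
    obtain a X where xa: "x = (a, X)" by (cases x)
    have a: "a \<in> carrier V" "X \<in> carrier W" using x xa by auto
    have "(a, X \<otimes>\<^bsub>W\<^esub> F a a) \<otimes>\<^bsub>Bgrp F\<^esub> x = (a \<otimes>\<^bsub>V\<^esub> a, (X \<otimes>\<^bsub>W\<^esub> F a a) \<otimes>\<^bsub>W\<^esub> (X \<otimes>\<^bsub>W\<^esub> F a a))"
      using a FW by (simp add: xa W.m_ac)
    also have "\<dots> = \<one>\<^bsub>Bgrp F\<^esub>" using a FW invV invW by simp
    finally show "\<exists>y\<in>carrier (Bgrp F). y \<otimes>\<^bsub>Bgrp F\<^esub> x = \<one>\<^bsub>Bgrp F\<^esub>" using a FW by force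
  qed
  show ?thesis
  proof (rule group.group_comm_groupI[OF gr])
    fix x y assume "x \<in> carrier (Bgrp F)" "y \<in> carrier (Bgrp F)"
    then show "x \<otimes>\<^bsub>Bgrp F\<^esub> y = y \<otimes>\<^bsub>Bgrp F\<^esub> x" using Fs FW by (auto simp: V.m_comm W.m_comm)
  qed
qed

end


lemma ed_iso_refl:
  assumes E: "is_ed E"
  shows "ed_iso E E (ed_id E)"
proof -
  have cA: "comm_group (edA E)" and cC: "comm_group (edC E)" and eh: "edEta E \<in> hom (edA E) (edC E)"
    using E by (auto simp: is_ed_def)
  have h1: "(\<lambda>x\<in>carrier (edA E). x) \<in> hom (edA E) (edA E)"
    using cA by (auto intro!: homI simp: comm_group_def group_def monoid.m_closed)
  have h2: "(\<lambda>x\<in>carrier (edC E). x) \<in> hom (edC E) (edC E)"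
    using cC by (auto intro!: homI simp: comm_group_def group_def monoid.m_closed)
  have m: "ed_id E \<in> ed_hom E E"
    unfolding ed_id_def ed_hom_def ghom_def using h1 h2 hom_in_carrier[OF eh] by auto
  have c: "ed_comp E (ed_id E) (ed_id E) = ed_id E"
    unfolding ed_comp_def ed_id_def compose_def by (auto intro!: restrict_ext)
  show ?thesis unfolding ed_iso_def using m c by blast
qed

lemma ess_surj:
  fixes E :: "('a, 'c) ed"
  assumes E: "is_ed E"
  shows "\<exists>N :: ('a, 'a \<times> 'c, 'c) eeed. is_eeed N \<and> ed_isomorphic (pi_obj N) E"
proof -
  let ?A = "edA E" and ?C = "edC E" and ?\<eta> = "edEta E"
  have cA: "cg ?A" and cC: "cg ?C" and eh: "?\<eta> \<in> hom ?A ?C"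
    and esq: "\<And>a. a \<in> carrier ?A \<Longrightarrow> ?\<eta> (a \<otimes>\<^bsub>?A\<^esub> a) = \<one>\<^bsub>?C\<^esub>"
    using E by (auto simp: is_ed_def cg_def)
  interpret A: cg ?A by (rule cA)
  interpret C: cg ?C by (rule cC)
  have ec: "\<And>a. a \<in> carrier ?A \<Longrightarrow> ?\<eta> a \<in> carrier ?C" by (rule hom_in_carrier[OF eh])
  have em: "\<And>a b. a \<in> carrier ?A \<Longrightarrow> b \<in> carrier ?A \<Longrightarrow> ?\<eta> (a \<otimes>\<^bsub>?A\<^esub> b) = ?\<eta> a \<otimes>\<^bsub>?C\<^esub> ?\<eta> b"
    by (rule hom_mult[OF eh])
  have e1: "?\<eta> \<one>\<^bsub>?A\<^esub> = \<one>\<^bsub>?C\<^esub>" by (rule hom_one'[OF eh A.is_group C.is_group])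
  define q where "q v = twice ?C #>\<^bsub>?C\<^esub> ?\<eta> v" for v
  have tT: "\<And>v. v \<in> two_torsion ?A \<Longrightarrow> v \<in> carrier ?A" by (simp add: two_torsion_def)
  have bl: "bil (tors2 ?A) (mod2 ?C) q"
  proof (rule bil.intro)
    show "cg (tors2 ?A)" using A.tors2_comm_group by (simp add: cg_def)
    show "cg (mod2 ?C)" using C.mod2_comm_group by (simp add: cg_def)
    show "q \<in> hom (tors2 ?A) (mod2 ?C)"
      by (rule homI) (simp_all add: q_def C.cls_closed ec tT em C.cls_mult)
    show "\<And>x. x \<in> carrier (tors2 ?A) \<Longrightarrow> x \<otimes>\<^bsub>tors2 ?A\<^esub> x = \<one>\<^bsub>tors2 ?A\<^esub>"
      by (simp add: two_torsion_def)
    show "\<And>x. x \<in> carrier (mod2 ?C) \<Longrightarrow> x \<otimes>\<^bsub>mod2 ?C\<^esub> x = \<one>\<^bsub>mod2 ?C\<^esub>" by (rule C.mod2_sq)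
  qed
  interpret b: bil "tors2 ?A" "mod2 ?C" q by (rule bl)
  obtain F where ok: "b.okUF (carrier (tors2 ?A)) F" using b.bil_exists by blast
  have FW: "\<And>u u'. u \<in> two_torsion ?A \<Longrightarrow> u' \<in> two_torsion ?A \<Longrightarrow> F u u' \<in> carrier (mod2 ?C)"
    and Fd: "\<And>u. u \<in> two_torsion ?A \<Longrightarrow> F u u = q u"
    using ok unfolding b.okUF_def by auto
  have one_tt: "\<one>\<^bsub>?A\<^esub> \<in> two_torsion ?A" by (simp add: two_torsion_def)
  have F11: "F \<one>\<^bsub>?A\<^esub> \<one>\<^bsub>?A\<^esub> = twice ?C"
    using Fd[OF one_tt] e1 by (simp add: q_def C.coset_mult_one C.twice_subgroup subgroup.subset)
  let ?B = "b.Bgrp F"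
  define N0 where "N0 = \<lparr>grpA = ?A, grpB = ?B, grpC = ?C, eta = ?\<eta>,
      chi = (\<lambda>c. (\<one>\<^bsub>?A\<^esub>, twice ?C #>\<^bsub>?C\<^esub> c)), psi = fst\<rparr>"
  have cB: "comm_group ?B" by (rule b.Bgrp_comm_group[OF ok])
  have isN0: "is_eeed N0"
    unfolding is_eeed_def is_eed_def eed_exact_def N0_def
  proof (simp only: eeed.simps, intro conjI ballI impI)
    show "comm_group ?A" "comm_group ?C" using cA cC by (simp_all add: cg_def)
    show "comm_group ?B" by (rule cB)
    show "?\<eta> \<in> hom ?A ?C" by (rule eh)
    show "(\<lambda>c. (\<one>\<^bsub>?A\<^esub>, twice ?C #>\<^bsub>?C\<^esub> c)) \<in> hom ?C ?B"
    proof (rule homI)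
      fix c assume "c \<in> carrier ?C" then show "(\<one>\<^bsub>?A\<^esub>, twice ?C #>\<^bsub>?C\<^esub> c) \<in> carrier ?B"
        by (simp add: one_tt C.cls_closed)
    next
      have r1: "\<And>X. X \<in> carrier (mod2 ?C) \<Longrightarrow> X \<otimes>\<^bsub>mod2 ?C\<^esub> twice ?C = X"
        using b.W.r_one by (simp add: one_mod2)
      fix c c' assume c: "c \<in> carrier ?C" and c': "c' \<in> carrier ?C"
      then show "(\<one>\<^bsub>?A\<^esub>, twice ?C #>\<^bsub>?C\<^esub> (c \<otimes>\<^bsub>?C\<^esub> c')) =
          (\<one>\<^bsub>?A\<^esub>, twice ?C #>\<^bsub>?C\<^esub> c) \<otimes>\<^bsub>?B\<^esub> (\<one>\<^bsub>?A\<^esub>, twice ?C #>\<^bsub>?C\<^esub> c')"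
        by (simp add: F11 C.cls_mult r1 C.cls_closed)
    qed
    show "fst \<in> hom ?B ?A" by (rule homI) (auto simp: tT)
  next
    fix a assume "a \<in> carrier ?A" then show "?\<eta> (a \<otimes>\<^bsub>?A\<^esub> a) = \<one>\<^bsub>?C\<^esub>" by (rule esq)
  next
    fix c assume "c \<in> carrier ?C" then show "fst (\<one>\<^bsub>?A\<^esub>, twice ?C #>\<^bsub>?C\<^esub> c) = \<one>\<^bsub>?A\<^esub>" by simp
  next
    fix x assume x: "x \<in> carrier ?B"
    obtain v X where xv: "x = (v, X)" by (cases x)
    have v: "v \<in> two_torsion ?A" and X: "X \<in> carrier (mod2 ?C)" using x xv by auto
    have "x \<otimes>\<^bsub>?B\<^esub> x = (\<one>\<^bsub>?A\<^esub>, q v)"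
      using v X FW[OF v v] Fd[OF v] b.invW[OF X] b.W.l_one b.qc
      by (simp add: xv two_torsion_def one_mod2)
    then show "(\<one>\<^bsub>?A\<^esub>, twice ?C #>\<^bsub>?C\<^esub> ?\<eta> (fst x)) = x \<otimes>\<^bsub>?B\<^esub> x"
      by (simp add: xv q_def)
  next
    fix a assume a: "a \<in> two_torsion ?A"
    show "\<exists>b\<in>carrier ?B. fst b = a"
      using a b.W.one_closed by (intro bexI[of _ "(a, twice ?C)"]) (auto simp: one_mod2)
  next
    fix x assume x: "x \<in> carrier ?B" and p: "fst x = \<one>\<^bsub>?A\<^esub>"
    obtain v X where xv: "x = (v, X)" by (cases x)
    have X: "X \<in> carrier (mod2 ?C)" using x xv by auto
    show "\<exists>c\<in>carrier ?C. (\<one>\<^bsub>?A\<^esub>, twice ?C #>\<^bsub>?C\<^esub> c) = x"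
    proof (rule bexI[of _ "SOME x. x \<in> X"])
      show "(\<one>\<^bsub>?A\<^esub>, twice ?C #>\<^bsub>?C\<^esub> (SOME x. x \<in> X)) = x"
        using p C.cls_rep[OF X] unfolding xv by simp
      show "(SOME x. x \<in> X) \<in> carrier ?C" using C.rep_carrier[OF X] .
    qed
  next
    fix c assume c: "c \<in> carrier ?C" and e: "(\<one>\<^bsub>?A\<^esub>, twice ?C #>\<^bsub>?C\<^esub> c) = \<one>\<^bsub>?B\<^esub>"
    then have "twice ?C #>\<^bsub>?C\<^esub> c = twice ?C" by (simp add: one_mod2)
    then show "c \<in> twice ?C" using C.cls_one_iff[OF c] by simp
  qed
  define j where "j p = (fst p, SOME x. x \<in> snd p)" for p :: "'a \<times> 'c set"
  have inj: "inj_on j (carrier (grpB N0))"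
  proof (rule inj_onI)
    fix x y assume x: "x \<in> carrier (grpB N0)" and y: "y \<in> carrier (grpB N0)" and e: "j x = j y"
    have X: "snd x \<in> carrier (mod2 ?C)" and Y: "snd y \<in> carrier (mod2 ?C)" using x y by (auto simp: N0_def)
    have r: "(SOME z. z \<in> snd x) = (SOME z. z \<in> snd y)" using e by (simp add: j_def)
    have "snd x = twice ?C #>\<^bsub>?C\<^esub> (SOME z. z \<in> snd x)" using C.cls_rep[OF X] by simp
    also have "\<dots> = twice ?C #>\<^bsub>?C\<^esub> (SOME z. z \<in> snd y)" using r by simp
    also have "\<dots> = snd y" using C.cls_rep[OF Y] .
    finally have "snd x = snd y" .
    moreover have "fst x = fst y" using e by (simp add: j_def)
    ultimately show "x = y" by (simp add: prod_eq_iff)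
  qed
  have "is_eeed (tr N0 j)" by (rule eeed_transport[OF isN0 inj])
  moreover have "pi_obj (tr N0 j) = E" unfolding pi_tr by (cases E) (simp add: pi_obj_def N0_def)
  moreover have "ed_isomorphic E E" unfolding ed_isomorphic_def using ed_iso_refl[OF E] by (rule exI)
  ultimately have "is_eeed (tr N0 j) \<and> ed_isomorphic (pi_obj (tr N0 j)) E" by simp
  then show ?thesis by (rule exI)
qed

theorem proposition3p7:
  shows
  \<comment> \<open>pi is essentially surjective\<close>
  "(\<forall>E :: ('a, 'c) ed. is_ed E \<longrightarrow>
      (\<exists>N :: ('a, 'a \<times> 'c, 'c) eeed. is_eeed N \<and> ed_isomorphic (pi_obj N) E))
   \<and>
  \<comment> \<open>pi reflects isomorphisms\<close>
   (\<forall>(N :: ('a, 'b, 'c) eeed) (N' :: ('a2, 'b2, 'c2) eeed) m.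
      is_eeed N \<and> is_eeed N' \<and> m \<in> eeed_hom N N' \<and>
      ed_iso (pi_obj N) (pi_obj N') (pi_mor m) \<longrightarrow> eeed_iso N N' m)
   \<and>
  \<comment> \<open>the short exact sequence 0 \<rightarrow> Hom(A[2], C'/2) \<rightarrow> EEED(N,N') \<rightarrow> ED(pi N, pi N') \<rightarrow> 0\<close>
   (\<forall>(N :: ('a, 'b, 'c) eeed) (N' :: ('a2, 'b2, 'c2) eeed).
      is_eeed N \<and> is_eeed N' \<longrightarrow>
      (let H = ghom (tors2 (grpA N)) (mod2 (grpC N')) in
        (\<forall>u\<in>H. xi N N' u \<in> eeed_hom N N') \<and>
        (\<forall>u\<in>H. \<forall>v\<in>H. xi N N' (hom_add (tors2 (grpA N)) (mod2 (grpC N')) u v)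
                         = eeed_add N N' (xi N N' u) (xi N N' v)) \<and>
        (\<forall>m\<in>eeed_hom N N'. \<forall>m'\<in>eeed_hom N N'.
            pi_mor (eeed_add N N' m m') = ed_add (pi_obj N) (pi_obj N') (pi_mor m) (pi_mor m')) \<and>
        inj_on (xi N N') H \<and>
        xi N N' ` H = {m \<in> eeed_hom N N'. pi_mor m = ed_zero (pi_obj N) (pi_obj N')} \<and>
        pi_mor ` eeed_hom N N' = ed_hom (pi_obj N) (pi_obj N')))
   \<and>
  \<comment> \<open>naturality in N and N'\<close>
   (\<forall>(M :: ('a0, 'b0, 'c0) eeed) (N :: ('a, 'b, 'c) eeed) (N' :: ('a2, 'b2, 'c2) eeed)
       (N'' :: ('a3, 'b3, 'c3) eeed) f1 g1 h1 f2 g2 h2.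
      is_eeed M \<and> is_eeed N \<and> is_eeed N' \<and> is_eeed N'' \<and>
      (f1, g1, h1) \<in> eeed_hom M N \<and> (f2, g2, h2) \<in> eeed_hom N' N'' \<longrightarrow>
      (\<forall>u\<in>ghom (tors2 (grpA N)) (mod2 (grpC N')).
         xi M N'' (\<lambda>a\<in>two_torsion (grpA M). mod2_map (grpC N') (grpC N'') h2 (u (f1 a)))
         = eeed_comp M (f2, g2, h2) (eeed_comp M (xi N N' u) (f1, g1, h1))) \<and>
      (\<forall>m\<in>eeed_hom N N'.
         pi_mor (eeed_comp M (f2, g2, h2) (eeed_comp M m (f1, g1, h1)))
         = ed_comp (pi_obj M) (pi_mor (f2, g2, h2)) (ed_comp (pi_obj M) (pi_mor m) (pi_mor (f1, g1, h1)))))"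
  proof -
  have P1: "\<forall>E :: ('a, 'c) ed. is_ed E \<longrightarrow>
      (\<exists>N :: ('a, 'a \<times> 'c, 'c) eeed. is_eeed N \<and> ed_isomorphic (pi_obj N) E)"
    using ess_surj by blast
  have P2: "\<forall>(N :: ('a, 'b, 'c) eeed) (N' :: ('a2, 'b2, 'c2) eeed) m.
      is_eeed N \<and> is_eeed N' \<and> m \<in> eeed_hom N N' \<and>
      ed_iso (pi_obj N) (pi_obj N') (pi_mor m) \<longrightarrow> eeed_iso N N' m"
  proof (intro allI impI)
    fix N :: "('a, 'b, 'c) eeed" and N' :: "('a2, 'b2, 'c2) eeed" and m
    assume a: "is_eeed N \<and> is_eeed N' \<and> m \<in> eeed_hom N N' \<and> ed_iso (pi_obj N) (pi_obj N') (pi_mor m)"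
    obtain f g h where m: "m = (f, g, h)" by (cases m)
    show "eeed_iso N N' m"
      using reflect_iso[of N N' f g h] a by (simp add: m eL_def pi_mor_def)
  qed
  have P3: "\<forall>(N :: ('a, 'b, 'c) eeed) (N' :: ('a2, 'b2, 'c2) eeed).
      is_eeed N \<and> is_eeed N' \<longrightarrow>
      (let H = ghom (tors2 (grpA N)) (mod2 (grpC N')) in
        (\<forall>u\<in>H. xi N N' u \<in> eeed_hom N N') \<and>
        (\<forall>u\<in>H. \<forall>v\<in>H. xi N N' (hom_add (tors2 (grpA N)) (mod2 (grpC N')) u v)
                         = eeed_add N N' (xi N N' u) (xi N N' v)) \<and>
        (\<forall>m\<in>eeed_hom N N'. \<forall>m'\<in>eeed_hom N N'.
            pi_mor (eeed_add N N' m m') = ed_add (pi_obj N) (pi_obj N') (pi_mor m) (pi_mor m')) \<and>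
        inj_on (xi N N') H \<and>
        xi N N' ` H = {m \<in> eeed_hom N N'. pi_mor m = ed_zero (pi_obj N) (pi_obj N')} \<and>
        pi_mor ` eeed_hom N N' = ed_hom (pi_obj N) (pi_obj N'))"
  proof (intro allI impI)
    fix N :: "('a, 'b, 'c) eeed" and N' :: "('a2, 'b2, 'c2) eeed"
    assume a: "is_eeed N \<and> is_eeed N'"
    have e: "eL N" "eL N'" using a by (simp_all add: eL_def)
    have full': "ed_hom (pi_obj N) (pi_obj N') \<subseteq> pi_mor ` eeed_hom N N'"
    proof
      fix p assume p: "p \<in> ed_hom (pi_obj N) (pi_obj N')"
      obtain f h where ph: "p = (f, h)" by (cases p)
      obtain g where "(f, g, h) \<in> eeed_hom N N'" using full[OF e] p ph by blast
      then show "p \<in> pi_mor ` eeed_hom N N'" using ph by (force simp: pi_mor_def)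
    qed
    show "let H = ghom (tors2 (grpA N)) (mod2 (grpC N')) in
        (\<forall>u\<in>H. xi N N' u \<in> eeed_hom N N') \<and>
        (\<forall>u\<in>H. \<forall>v\<in>H. xi N N' (hom_add (tors2 (grpA N)) (mod2 (grpC N')) u v)
                         = eeed_add N N' (xi N N' u) (xi N N' v)) \<and>
        (\<forall>m\<in>eeed_hom N N'. \<forall>m'\<in>eeed_hom N N'.
            pi_mor (eeed_add N N' m m') = ed_add (pi_obj N) (pi_obj N') (pi_mor m) (pi_mor m')) \<and>
        inj_on (xi N N') H \<and>
        xi N N' ` H = {m \<in> eeed_hom N N'. pi_mor m = ed_zero (pi_obj N) (pi_obj N')} \<and>
        pi_mor ` eeed_hom N N' = ed_hom (pi_obj N) (pi_obj N')"
      unfolding Let_def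
      using xi_hom[OF e] xi_add[OF e] pi_add xi_inj[OF e] xi_image[OF e] full_sub full'
      by blast
  qed
  have P4: "\<forall>(M :: ('a0, 'b0, 'c0) eeed) (N :: ('a, 'b, 'c) eeed) (N' :: ('a2, 'b2, 'c2) eeed)
       (N'' :: ('a3, 'b3, 'c3) eeed) f1 g1 h1 f2 g2 h2.
      is_eeed M \<and> is_eeed N \<and> is_eeed N' \<and> is_eeed N'' \<and>
      (f1, g1, h1) \<in> eeed_hom M N \<and> (f2, g2, h2) \<in> eeed_hom N' N'' \<longrightarrow>
      (\<forall>u\<in>ghom (tors2 (grpA N)) (mod2 (grpC N')).
         xi M N'' (\<lambda>a\<in>two_torsion (grpA M). mod2_map (grpC N') (grpC N'') h2 (u (f1 a)))
         = eeed_comp M (f2, g2, h2) (eeed_comp M (xi N N' u) (f1, g1, h1))) \<and>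
      (\<forall>m\<in>eeed_hom N N'.
         pi_mor (eeed_comp M (f2, g2, h2) (eeed_comp M m (f1, g1, h1)))
         = ed_comp (pi_obj M) (pi_mor (f2, g2, h2)) (ed_comp (pi_obj M) (pi_mor m) (pi_mor (f1, g1, h1))))"
  proof (intro allI impI conjI ballI)
    fix M :: "('a0, 'b0, 'c0) eeed" and N :: "('a, 'b, 'c) eeed" and N' :: "('a2, 'b2, 'c2) eeed"
      and N'' :: "('a3, 'b3, 'c3) eeed" and f1 g1 h1 f2 g2 h2 u
    assume a: "is_eeed M \<and> is_eeed N \<and> is_eeed N' \<and> is_eeed N'' \<and>
      (f1, g1, h1) \<in> eeed_hom M N \<and> (f2, g2, h2) \<in> eeed_hom N' N''"
      and u: "u \<in> ghom (tors2 (grpA N)) (mod2 (grpC N'))"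
    show "xi M N'' (\<lambda>a\<in>two_torsion (grpA M). mod2_map (grpC N') (grpC N'') h2 (u (f1 a)))
         = eeed_comp M (f2, g2, h2) (eeed_comp M (xi N N' u) (f1, g1, h1))"
      using nat_xi[of M N N' N'' f1 g1 h1 f2 g2 h2 u] a u by (simp add: eL_def)
  next
    fix M :: "('a0, 'b0, 'c0) eeed" and N :: "('a, 'b, 'c) eeed" and N' :: "('a2, 'b2, 'c2) eeed"
      and N'' :: "('a3, 'b3, 'c3) eeed" and f1 g1 h1 f2 g2 h2 m
    show "pi_mor (eeed_comp M (f2, g2, h2) (eeed_comp M m (f1, g1, h1)))
         = ed_comp (pi_obj M) (pi_mor (f2, g2, h2)) (ed_comp (pi_obj M) (pi_mor m) (pi_mor (f1, g1, h1)))"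
      by (rule nat_pi)
  qed
  show ?thesis using P1 P2 P3 P4 by blast
qed

end
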